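(* Let $n\ge 1$, let $\lambda_0\in\mathbb{C}$, and let $\lambda_1^{\mathcal{C}},\dots,\lambda_n^{\mathcal{C}},\lambda_1^{\mathcal{B}},\dots,\lambda_n^{\mathcal{B}}\in\mathbb{C}$. Put $X=\{\lambda_1^{\mathcal{C}},\dots,\lambda_n^{\mathcal{C}}\}$, $Y=\{\lambda_1^{\mathcal{B}},\dots,\lambda_n^{\mathcal{B}}\}$, and for $\lambda\in X$ (resp. $\lambda\in Y$) write $X_\lambda=X\setminus\{\lambda\}$ (resp. $Y_\lambda=Y\setminus\{\lambda\}$). For $\lambda=\lambda_k^{\mathcal{C}}\in X$, let $\vec X^{0,n}_\lambda$ denote the $n$-tuple obtained from $(\lambda_0,\lambda_1^{\mathcal{C}},\dots,\lambda_n^{\mathcal{C}})$ by deleting the entry $\lambda_k^{\mathcal{C}}$; similarly, for $\lambda=\lambda_k^{\mathcal{B}}\in Y$, let $\vec Y^{0,n}_\lambda$ be obtained from $(\lambda_0,\lambda_1^{\mathcal{B}},\dots,\lambda_n^{\mathcal{B}})$ by deleting $\lambda_k^{\mathcal{B}}$. Define $$M_0=\Lambda_{\mathcal{A}}(\lambda_0)\Big\{\prod_{\lambda\in Y}\frac{a(\lambda-\lambda_0)}{b(\lambda-\lambda_0)}\frac{b(\lambda+\lambda_0)}{a(\lambda+\lambda_0)}-\prod_{\lambda\in X}\frac{a(\lambda-\lambda_0)}{b(\lambda-\lambda_0)}\frac{b(\lambda+\lambda_0)}{a(\lambda+\lambda_0)}\Big\},$$ $$N^{(\mathcal{C})}_\lambda=\Lambda_{\mathcal{A}}(\lambda)\frac{c}{b(\lambda-\lambda_0)}\frac{b(2\lambda)}{a(2\lambda)}\prod_{\tilde\lambda\in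 X_\lambda}\frac{a(\tilde\lambda-\lambda)}{b(\tilde\lambda-\lambda)}\frac{b(\tilde\lambda+\lambda)}{a(\tilde\lambda+\lambda)}+\Lambda_{\tilde{\mathcal{D}}}(\lambda)\frac{c}{a(\lambda+\lambda_0)}\prod_{\tilde\lambda\in X_\lambda}\frac{a(\lambda-\tilde\lambda)}{b(\lambda-\tilde\lambda)}\frac{a(\lambda+\tilde\lambda+\gamma)}{b(\lambda+\tilde\lambda+\gamma)}$$ for $\lambda\in X$, and $$N^{(\mathcal{B})}_\lambda=-\Lambda_{\mathcal{A}}(\lambda)\frac{c}{b(\lambda-\lambda_0)}\frac{b(2\lambda)}{a(2\lambda)}\prod_{\tilde\lambda\in Y_\lambda}\frac{a(\tilde\lambda-\lambda)}{b(\tilde\lambda-\lambda)}\frac{b(\tilde\lambda+\lambda)}{a(\tilde\lambda+\lambda)}-\Lambda_{\tilde{\mathcal{D}}}(\lambda)\frac{c}{a(\lambda+\lambda_0)}\prod_{\tilde\lambda\in Y_\lambda}\frac{a(\lambda-\tilde\lambda)}{b(\lambda-\tilde\lambda)}\frac{a(\lambda+\tilde\lambda+\gamma)}{b(\lambda+\tilde\lambda+\gamma)}$$ for $\lambda\in Y$. Then the scalar product satisfies $$M_0\,\mathcal{S}_n(\lambda_1^{\mathcal{C}},\dots,\lambda_n^{\mathcal{C}}\,|\,\lambda_1^{\mathcal{B}},\dots,\lambda_n^{\mathcal{B}})+\sum_{\lambda\in X}N^{(\mathcal{C})}_\lambda\,\mathcal{S}_n(\vec X^{0,n}_\lambda\,|\,\lambda_1^{\mathcal{B}},\dots,\lambda_n^{\mathcal{B}})+\sum_{\lambda\in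 Y}N^{(\mathcal{B})}_\lambda\,\mathcal{S}_n(\lambda_1^{\mathcal{C}},\dots,\lambda_n^{\mathcal{C}}\,|\,\vec Y^{0,n}_\lambda)=0.$$
   Context: Fix generic $\gamma,h\in\mathbb{C}$, an integer $L\ge1$ and inhomogeneities $\mu_1,\dots,\mu_L\in\mathbb{C}$. Set $a(\lambda)=\sinh(\lambda+\gamma)$, $b(\lambda)=\sinh(\lambda)$, $c=c(\lambda)=\sinh(\gamma)$ (a constant). Let $\mathcal{R}(\lambda)\in\mathrm{End}(\mathbb{C}^2\otimes\mathbb{C}^2)$ be the six-vertex ($\mathcal{U}_q[\widehat{\mathfrak{sl}}(2)]$-invariant) R-matrix, which in the basis $e_1\otimes e_1,e_1\otimes e_2,e_2\otimes e_1,e_2\otimes e_2$ is $\begin{pmatrix}a(\lambda)&0&0&0\\0&b(\lambda)&c&0\\0&c&b(\lambda)&0\\0&0&0&a(\lambda)\end{pmatrix}$, and let $\mathcal{K}(\lambda)=\mathrm{diag}(\sinh(h+\lambda),\sinh(h-\lambda))$. With an auxiliary space $V_0\cong\mathbb{C}^2$ and quantum space $V_{\mathcal{Q}}=(\mathbb{C}^2)^{\otimes L}$ (sites $1,\dots,L$), $\mathcal{R}_{0j}$ denotes $\mathcal{R}$ acting on $V_0\otimes V_j$ and $\mathcal{K}_0$ denotes $\mathcal{K}$ acting on $V_0$. Operators $\mathcal{A},\mathcal{B},\mathcal{C},\mathcal{D}(\lambda)\in\mathrm{End}(V_{\mathcal{Q}})$ are defined by $\mathcal{R}_{0L}(\lambda-\mu_L)\cdots\mathcal{R}_{01}(\lambda-\mu_1)\,\mathcal{K}_0(\lambda)\,\mathcal{R}_{01}(\lambda+\mu_1)\cdots\mathcal{R}_{0L}(\lambda+\mu_L)=\begin{pmatrix}\mathcal{A}(\lambda)&\mathcal{B}(\lambda)\\\mathcal{C}(\lambda)&\mathcal{D}(\lambda)\end{pmatrix}$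 (a $2\times2$ matrix on $V_0$). Let $|0\rangle=(1,0)^{T\otimes L}$ and $\langle 0|=(1,0)^{\otimes L}$. The off-shell scalar product is $\mathcal{S}_n(\lambda_1^{\mathcal{C}},\dots,\lambda_n^{\mathcal{C}}\,|\,\lambda_1^{\mathcal{B}},\dots,\lambda_n^{\mathcal{B}})=\langle0|\mathcal{C}(\lambda_n^{\mathcal{C}})\cdots\mathcal{C}(\lambda_1^{\mathcal{C}})\mathcal{B}(\lambda_1^{\mathcal{B}})\cdots\mathcal{B}(\lambda_n^{\mathcal{B}})|0\rangle$ for arbitrary complex variables. Also $\Lambda_{\mathcal{A}}(\lambda)=b(h+\lambda)\prod_{j=1}^L a(\lambda-\mu_j)a(\lambda+\mu_j)$ and $\Lambda_{\tilde{\mathcal{D}}}(\lambda)=-\frac{b(2\lambda)}{a(2\lambda)}a(\lambda-h)\prod_{j=1}^L b(\lambda-\mu_j)b(\lambda+\mu_j)$. The identity is understood as an identity of meromorphic functions of all the variables. *)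

theory Defs
  imports Complex_Main
begin

(* Basis convention: False = e_1, True = e_2.
   A state of V_Q = (C^2)^{\<otimes>L} is a function on bool lists (only lists of length L matter);
   site j (1 \<le> j \<le> L) corresponds to list index j-1.
   A state of V_0 \<otimes> V_Q is a function on bool \<times> bool list, the first component being V_0. *)

type_synonym qstate = "bool list \<Rightarrow> complex"
type_synonym fstate = "bool \<times> bool list \<Rightarrow> complex"

definition wa :: "complex \<Rightarrow> complex \<Rightarrow> complex" where
  "wa \<gamma> x = sinh (x + \<gamma>)"
definition wb :: "complex \<Rightarrow> complex" where
  "wb x = sinh x"
definition wc :: "complex \<Rightarrow> complex" where
  "wc \<gamma> = sinh \<gamma>"

(* entry of R(x) at row e_{i1}\<otimes>e_{j1}, column e_{i2}\<otimes>e_{j2} *)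
definition Rent :: "complex \<Rightarrow> complex \<Rightarrow> bool \<times> bool \<Rightarrow> bool \<times> bool \<Rightarrow> complex" where
  "Rent \<gamma> x r c' = (case (r, c') of ((i1, j1), (i2, j2)) \<Rightarrow>
     if i1 = i2 \<and> j1 = j2 then (if i1 = j1 then wa \<gamma> x else wb x)
     else if i1 = j2 \<and> j1 = i2 then wc \<gamma> else 0)"

definition Rop :: "complex \<Rightarrow> complex \<Rightarrow> nat \<Rightarrow> fstate \<Rightarrow> fstate" where
  "Rop \<gamma> x j \<psi> = (\<lambda>(a0, s). \<Sum>a0'\<in>UNIV. \<Sum>t\<in>UNIV.
      Rent \<gamma> x (a0, s ! (j - 1)) (a0', t) * \<psi> (a0', s[j - 1 := t]))"

definition Kop :: "complex \<Rightarrow> complex \<Rightarrow> fstate \<Rightarrow> fstate" where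
  "Kop h x \<psi> = (\<lambda>(a0, s). (if a0 then sinh (h - x) else sinh (h + x)) * \<psi> (a0, s))"

(* R_{0L}(\<lambda>-\<mu>_L) \<cdots> R_{01}(\<lambda>-\<mu>_1) K_0(x) R_{01}(\<lambda>+\<mu>_1) \<cdots> R_{0L}(\<lambda>+\<mu>_L) *)
definition Mono :: "complex \<Rightarrow> complex \<Rightarrow> nat \<Rightarrow> (nat \<Rightarrow> complex) \<Rightarrow> complex \<Rightarrow> fstate \<Rightarrow> fstate" where
  "Mono \<gamma> h L \<mu> x =
     fold (\<lambda>j f. Rop \<gamma> (x - \<mu> j) j \<circ> f) [1..<L+1] id
     \<circ> Kop h x
     \<circ> fold (\<lambda>j f. f \<circ> Rop \<gamma> (x + \<mu> j) j) [1..<L+1] id"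

(* (i,j) entry (as operator on V_Q) of the double-row monodromy matrix on V_0 *)
definition Ment :: "complex \<Rightarrow> complex \<Rightarrow> nat \<Rightarrow> (nat \<Rightarrow> complex) \<Rightarrow> bool \<Rightarrow> bool \<Rightarrow> complex \<Rightarrow> qstate \<Rightarrow> qstate" where
  "Ment \<gamma> h L \<mu> i j x \<psi> = (\<lambda>s. Mono \<gamma> h L \<mu> x (\<lambda>(a, s'). if a = j then \<psi> s' else 0) (i, s))"

definition Bop :: "complex \<Rightarrow> complex \<Rightarrow> nat \<Rightarrow> (nat \<Rightarrow> complex) \<Rightarrow> complex \<Rightarrow> qstate \<Rightarrow> qstate" where
  "Bop \<gamma> h L \<mu> = Ment \<gamma> h L \<mu> False True"
definition Cop :: "complex \<Rightarrow> complex \<Rightarrow> nat \<Rightarrow> (nat \<Rightarrow> complex) \<Rightarrow> complex \<Rightarrow> qstate \<Rightarrow> qstate" where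
  "Cop \<gamma> h L \<mu> = Ment \<gamma> h L \<mu> True False"

definition vac :: "nat \<Rightarrow> qstate" where
  "vac L = (\<lambda>s. if s = replicate L False then 1 else 0)"

(* S_n(xs | ys) = <0| C(x_n)\<cdots>C(x_1) B(y_1)\<cdots>B(y_n) |0> *)
definition Sn :: "complex \<Rightarrow> complex \<Rightarrow> nat \<Rightarrow> (nat \<Rightarrow> complex) \<Rightarrow> complex list \<Rightarrow> complex list \<Rightarrow> complex" where
  "Sn \<gamma> h L \<mu> xs ys =
     fold (Cop \<gamma> h L \<mu>) xs (foldr (Bop \<gamma> h L \<mu>) ys (vac L)) (replicate L False)"

definition LamA :: "complex \<Rightarrow> complex \<Rightarrow> nat \<Rightarrow> (nat \<Rightarrow> complex) \<Rightarrow> complex \<Rightarrow> complex" where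
  "LamA \<gamma> h L \<mu> x = wb (h + x) * (\<Prod>j=1..L. wa \<gamma> (x - \<mu> j) * wa \<gamma> (x + \<mu> j))"

definition LamDt :: "complex \<Rightarrow> complex \<Rightarrow> nat \<Rightarrow> (nat \<Rightarrow> complex) \<Rightarrow> complex \<Rightarrow> complex" where
  "LamDt \<gamma> h L \<mu> x = - (wb (2 * x) / wa \<gamma> (2 * x)) * wa \<gamma> (x - h)
      * (\<Prod>j=1..L. wb (x - \<mu> j) * wb (x + \<mu> j))"

definition F1 :: "complex \<Rightarrow> complex \<Rightarrow> complex \<Rightarrow> complex" where
  "F1 \<gamma> u v = wa \<gamma> (u - v) / wb (u - v) * (wb (u + v) / wa \<gamma> (u + v))"

definition F2 :: "complex \<Rightarrow> complex \<Rightarrow> complex \<Rightarrow> complex" where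
  "F2 \<gamma> u v = wa \<gamma> (u - v) / wb (u - v) * (wa \<gamma> (u + v + \<gamma>) / wb (u + v + \<gamma>))"

definition M0 :: "complex \<Rightarrow> complex \<Rightarrow> nat \<Rightarrow> (nat \<Rightarrow> complex) \<Rightarrow> complex \<Rightarrow> complex list \<Rightarrow> complex list \<Rightarrow> complex" where
  "M0 \<gamma> h L \<mu> l0 xs ys = LamA \<gamma> h L \<mu> l0 *
     ((\<Prod>k<length ys. F1 \<gamma> (ys ! k) l0) - (\<Prod>k<length xs. F1 \<gamma> (xs ! k) l0))"

(* N^{(C)}_{\<lambda>} for x = zs!k, with X_x = the other entries of zs; N^{(B)} = - this with zs = ys *)
definition Nlam :: "complex \<Rightarrow> complex \<Rightarrow> nat \<Rightarrow> (nat \<Rightarrow> complex) \<Rightarrow> complex \<Rightarrow> complex list \<Rightarrow> nat \<Rightarrow> complex" where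
  "Nlam \<gamma> h L \<mu> l0 zs k = (let l = zs ! k in
     LamA \<gamma> h L \<mu> l * (wc \<gamma> / wb (l - l0)) * (wb (2 * l) / wa \<gamma> (2 * l))
       * (\<Prod>j\<in>{..<length zs} - {k}. F1 \<gamma> (zs ! j) l)
     + LamDt \<gamma> h L \<mu> l * (wc \<gamma> / wa \<gamma> (l + l0))
       * (\<Prod>j\<in>{..<length zs} - {k}. F2 \<gamma> l (zs ! j)))"

definition NC where "NC = Nlam"
definition NB :: "complex \<Rightarrow> complex \<Rightarrow> nat \<Rightarrow> (nat \<Rightarrow> complex) \<Rightarrow> complex \<Rightarrow> complex list \<Rightarrow> nat \<Rightarrow> complex" where
  "NB \<gamma> h L \<mu> l0 zs k = - Nlam \<gamma> h L \<mu> l0 zs k"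

definition delvec :: "complex \<Rightarrow> complex list \<Rightarrow> nat \<Rightarrow> complex list" where
  "delvec l0 zs k = l0 # (take k zs @ drop (Suc k) zs)"

end

theory Submission
  imports Defs
begin

type_synonym tstate = "bool \<times> bool \<times> bool list \<Rightarrow> complex"

definition Rr :: "complex \<Rightarrow> complex \<Rightarrow> nat \<Rightarrow> fstate \<Rightarrow> fstate" where
  "Rr \<gamma> x j \<psi> = (\<lambda>(a0, s). if j - 1 < length s then (\<Sum>a0'\<in>UNIV. \<Sum>t\<in>UNIV.
      Rent \<gamma> x (a0, s ! (j - 1)) (a0', t) * \<psi> (a0', s[j - 1 := t])) else \<psi> (a0, s))"

definition Lift1 :: "(fstate \<Rightarrow> fstate) \<Rightarrow> tstate \<Rightarrow> tstate" where
  "Lift1 F \<Psi> = (\<lambda>(a1, a2, s). F (\<lambda>(b, s'). \<Psi> (b, a2, s')) (a1, s))"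
definition Lift2 :: "(fstate \<Rightarrow> fstate) \<Rightarrow> tstate \<Rightarrow> tstate" where
  "Lift2 F \<Psi> = (\<lambda>(a1, a2, s). F (\<lambda>(b, s'). \<Psi> (a1, b, s')) (a2, s))"
definition R12 :: "complex \<Rightarrow> complex \<Rightarrow> tstate \<Rightarrow> tstate" where
  "R12 \<gamma> x \<Psi> = (\<lambda>(a1, a2, s). \<Sum>b1\<in>UNIV. \<Sum>b2\<in>UNIV. Rent \<gamma> x (a1, a2) (b1, b2) * \<Psi> (b1, b2, s))"

lemma Lift1_comp: "Lift1 (F \<circ> G) = Lift1 F \<circ> Lift1 G"
  by (rule ext)+ (auto simp: Lift1_def)
lemma Lift2_comp: "Lift2 (F \<circ> G) = Lift2 F \<circ> Lift2 G"
  by (rule ext)+ (auto simp: Lift2_def)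

lemma UNIV_bool_sum: "(\<Sum>b\<in>(UNIV::bool set). f b) = f False + f True"
  by (simp add: UNIV_bool)

lemma YBE_A:
  "R12 \<gamma> (u - v) \<circ> Lift1 (Rr \<gamma> u j) \<circ> Lift2 (Rr \<gamma> v j)
   = Lift2 (Rr \<gamma> v j) \<circ> Lift1 (Rr \<gamma> u j) \<circ> R12 \<gamma> (u - v)"
proof (rule ext, rule ext, clarify)
  fix \<Psi> :: tstate and a1 a2 s
  show "(R12 \<gamma> (u - v) \<circ> Lift1 (Rr \<gamma> u j) \<circ> Lift2 (Rr \<gamma> v j)) \<Psi> (a1, a2, s) =
        (Lift2 (Rr \<gamma> v j) \<circ> Lift1 (Rr \<gamma> u j) \<circ> R12 \<gamma> (u - v)) \<Psi> (a1, a2, s)"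
  proof (cases "j - 1 < length s")
    case True
    then show ?thesis
      apply (cases a1; cases a2; cases "s ! (j - 1)")
      apply (simp_all add: R12_def Lift1_def Lift2_def Rr_def UNIV_bool_sum Rent_def)
      apply (simp_all add: wa_def wb_def wc_def sinh_field_def exp_add exp_diff exp_minus)
      apply (simp_all add: field_simps)
      done
  next
    case False
    then show ?thesis by (simp add: R12_def Lift1_def Lift2_def Rr_def)
  qed
qed

lemma YBE_B:
  assumes "z = y - x"
  shows "Lift2 (Rr \<gamma> x j) \<circ> R12 \<gamma> y \<circ> Lift1 (Rr \<gamma> z j)
   = Lift1 (Rr \<gamma> z j) \<circ> R12 \<gamma> y \<circ> Lift2 (Rr \<gamma> x j)"
proof (rule ext, rule ext, clarify)
  fix \<Psi> :: tstate and a1 a2 s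
  show "(Lift2 (Rr \<gamma> x j) \<circ> R12 \<gamma> y \<circ> Lift1 (Rr \<gamma> z j)) \<Psi> (a1, a2, s) =
        (Lift1 (Rr \<gamma> z j) \<circ> R12 \<gamma> y \<circ> Lift2 (Rr \<gamma> x j)) \<Psi> (a1, a2, s)"
  proof (cases "j - 1 < length s")
    case True
    then show ?thesis
      unfolding assms
      apply (cases a1; cases a2; cases "s ! (j - 1)")
      apply (simp_all add: R12_def Lift1_def Lift2_def Rr_def UNIV_bool_sum Rent_def)
      apply (simp_all add: wa_def wb_def wc_def sinh_field_def exp_add exp_diff exp_minus)
      apply (simp_all add: field_simps)
      done
  next
    case False
    then show ?thesis by (simp add: R12_def Lift1_def Lift2_def Rr_def)
  qed
qed

lemma KRE:
  "R12 \<gamma> (x - y) \<circ> Lift1 (Kop h x) \<circ> R12 \<gamma> (x + y) \<circ> Lift2 (Kop h y)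
   = Lift2 (Kop h y) \<circ> R12 \<gamma> (x + y) \<circ> Lift1 (Kop h x) \<circ> R12 \<gamma> (x - y)"
proof (rule ext, rule ext, clarify)
  fix \<Psi> :: tstate and a1 a2 s
  show "(R12 \<gamma> (x - y) \<circ> Lift1 (Kop h x) \<circ> R12 \<gamma> (x + y) \<circ> Lift2 (Kop h y)) \<Psi> (a1, a2, s) =
        (Lift2 (Kop h y) \<circ> R12 \<gamma> (x + y) \<circ> Lift1 (Kop h x) \<circ> R12 \<gamma> (x - y)) \<Psi> (a1, a2, s)"
      apply (cases a1; cases a2)
      apply (simp_all add: R12_def Lift1_def Lift2_def Kop_def UNIV_bool_sum Rent_def)
      apply (simp_all add: wa_def wb_def wc_def sinh_field_def exp_add exp_diff exp_minus)
      apply (simp_all add: field_simps)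
      done
qed

lemma comm_RR:
  assumes "j \<ge> 1" "k \<ge> 1" "j \<noteq> k"
  shows "Lift1 (Rr \<gamma> x j) \<circ> Lift2 (Rr \<gamma> y k) = Lift2 (Rr \<gamma> y k) \<circ> Lift1 (Rr \<gamma> x j)"
proof (rule ext, rule ext, clarify)
  fix \<Psi> :: tstate and a1 a2 s
  have ne: "j - 1 \<noteq> k - 1" using assms by simp
  show "(Lift1 (Rr \<gamma> x j) \<circ> Lift2 (Rr \<gamma> y k)) \<Psi> (a1, a2, s) =
        (Lift2 (Rr \<gamma> y k) \<circ> Lift1 (Rr \<gamma> x j)) \<Psi> (a1, a2, s)"
    using ne
    by (simp add: Lift1_def Lift2_def Rr_def UNIV_bool_sum list_update_swap algebra_simps)
qed

lemma comm_RK: "Lift1 (Rr \<gamma> x j) \<circ> Lift2 (Kop h y) = Lift2 (Kop h y) \<circ> Lift1 (Rr \<gamma> x j)"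
  by (rule ext, rule ext, clarify) (simp add: Lift1_def Lift2_def Rr_def Kop_def UNIV_bool_sum algebra_simps)
lemma comm_KR: "Lift1 (Kop h x) \<circ> Lift2 (Rr \<gamma> y k) = Lift2 (Rr \<gamma> y k) \<circ> Lift1 (Kop h x)"
  by (rule ext, rule ext, clarify) (simp add: Lift1_def Lift2_def Rr_def Kop_def UNIV_bool_sum algebra_simps)

fun Mr :: "complex \<Rightarrow> complex \<Rightarrow> (nat \<Rightarrow> complex) \<Rightarrow> complex \<Rightarrow> nat list \<Rightarrow> fstate \<Rightarrow> fstate" where
  "Mr \<gamma> h \<mu> x [] = Kop h x"
| "Mr \<gamma> h \<mu> x (j # js) = Rr \<gamma> (x - \<mu> j) j \<circ> Mr \<gamma> h \<mu> x js \<circ> Rr \<gamma> (x + \<mu> j) j"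

lemma comm3: "r \<circ> a = a \<circ> r \<Longrightarrow> r \<circ> m = m \<circ> r \<Longrightarrow> r \<circ> b = b \<circ> r \<Longrightarrow> r \<circ> (a \<circ> m \<circ> b) = (a \<circ> m \<circ> b) \<circ> r"
  by (simp add: fun_eq_iff)

lemma comm_R1_M2:
  assumes "j \<ge> 1" "j \<notin> set js" "\<forall>k\<in>set js. k \<ge> 1"
  shows "Lift1 (Rr \<gamma> x j) \<circ> Lift2 (Mr \<gamma> h \<mu> y js) = Lift2 (Mr \<gamma> h \<mu> y js) \<circ> Lift1 (Rr \<gamma> x j)"
  using assms
proof (induction js)
  case Nil
  then show ?case by (simp only: Mr.simps comm_RK)
next
  case (Cons k js)
  have c1: "Lift1 (Rr \<gamma> x j) \<circ> Lift2 (Rr \<gamma> z k) = Lift2 (Rr \<gamma> z k) \<circ> Lift1 (Rr \<gamma> x j)" for z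
    using Cons.prems by (intro comm_RR) auto
  have ih: "Lift1 (Rr \<gamma> x j) \<circ> Lift2 (Mr \<gamma> h \<mu> y js) = Lift2 (Mr \<gamma> h \<mu> y js) \<circ> Lift1 (Rr \<gamma> x j)"
    by (rule Cons.IH) (use Cons.prems in auto)
  show ?case
    by (simp only: Mr.simps Lift2_comp) (intro comm3 c1 ih)
qed

lemma comm_M1_R2:
  assumes "j \<ge> 1" "j \<notin> set js" "\<forall>k\<in>set js. k \<ge> 1"
  shows "Lift1 (Mr \<gamma> h \<mu> x js) \<circ> Lift2 (Rr \<gamma> y j) = Lift2 (Rr \<gamma> y j) \<circ> Lift1 (Mr \<gamma> h \<mu> x js)"
  using assms
proof (induction js)
  case Nil
  then show ?case by (simp only: Mr.simps comm_KR)
next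
  case (Cons k js)
  have c1: "Lift1 (Rr \<gamma> z k) \<circ> Lift2 (Rr \<gamma> y j) = Lift2 (Rr \<gamma> y j) \<circ> Lift1 (Rr \<gamma> z k)" for z
    using Cons.prems by (intro comm_RR) auto
  have ih: "Lift1 (Mr \<gamma> h \<mu> x js) \<circ> Lift2 (Rr \<gamma> y j) = Lift2 (Rr \<gamma> y j) \<circ> Lift1 (Mr \<gamma> h \<mu> x js)"
    by (rule Cons.IH) (use Cons.prems in auto)
  show ?case
    by (simp only: Mr.simps Lift1_comp) (rule sym, intro comm3 c1[symmetric] ih[symmetric])
qed

lemma ctx2: "f \<circ> g = f' \<circ> g' \<Longrightarrow> f \<circ> (g \<circ> X) = f' \<circ> (g' \<circ> X)"
  by (metis comp_assoc)
lemma ctx3: "f \<circ> g \<circ> h = f' \<circ> g' \<circ> h' \<Longrightarrow> f \<circ> (g \<circ> (h \<circ> X)) = f' \<circ> (g' \<circ> (h' \<circ> X))"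
  by (metis comp_assoc)
lemma ctx4: "f \<circ> g \<circ> h \<circ> k = f' \<circ> g' \<circ> h' \<circ> k' \<Longrightarrow> f \<circ> (g \<circ> (h \<circ> (k \<circ> X))) = f' \<circ> (g' \<circ> (h' \<circ> (k' \<circ> X)))"
  by (metis comp_assoc)
lemma ctx3e: "f \<circ> g \<circ> h = f' \<circ> g' \<circ> h' \<Longrightarrow> f \<circ> (g \<circ> h) = f' \<circ> (g' \<circ> h')"
  by (metis comp_assoc)

lemma RE:
  assumes "distinct js" "\<forall>k\<in>set js. k \<ge> 1"
  shows "R12 \<gamma> (x - y) \<circ> Lift1 (Mr \<gamma> h \<mu> x js) \<circ> R12 \<gamma> (x + y) \<circ> Lift2 (Mr \<gamma> h \<mu> y js)
       = Lift2 (Mr \<gamma> h \<mu> y js) \<circ> R12 \<gamma> (x + y) \<circ> Lift1 (Mr \<gamma> h \<mu> x js) \<circ> R12 \<gamma> (x - y)"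
  using assms
proof (induction js)
  case Nil
  then show ?case by (simp only: Mr.simps KRE)
next
  case (Cons j js)
  define P where "P = R12 \<gamma> (x - y)"
  define Q where "Q = R12 \<gamma> (x + y)"
  define A1 where "A1 = Lift1 (Rr \<gamma> (x - \<mu> j) j)"
  define B1 where "B1 = Lift1 (Rr \<gamma> (x + \<mu> j) j)"
  define A2 where "A2 = Lift2 (Rr \<gamma> (y - \<mu> j) j)"
  define B2 where "B2 = Lift2 (Rr \<gamma> (y + \<mu> j) j)"
  define W1 where "W1 = Lift1 (Mr \<gamma> h \<mu> x js)"
  define W2 where "W2 = Lift2 (Mr \<gamma> h \<mu> y js)"
  have j1: "j \<ge> 1" and jn: "j \<notin> set js" and js1: "\<forall>k\<in>set js. k \<ge> 1" and dj: "distinct js"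
    using Cons.prems by auto
  have IH: "P \<circ> W1 \<circ> Q \<circ> W2 = W2 \<circ> Q \<circ> W1 \<circ> P"
    unfolding P_def Q_def W1_def W2_def using Cons.IH dj js1 by blast
  have s1: "B1 \<circ> Q \<circ> A2 = A2 \<circ> Q \<circ> B1"
    unfolding B1_def Q_def A2_def by (rule YBE_B[symmetric]) simp
  have s2a: "W1 \<circ> A2 = A2 \<circ> W1" unfolding W1_def A2_def using comm_M1_R2[OF j1 jn js1] by blast
  have s2b: "B1 \<circ> W2 = W2 \<circ> B1" unfolding W2_def B1_def using comm_R1_M2[OF j1 jn js1] by blast
  have s3: "P \<circ> A1 \<circ> A2 = A2 \<circ> A1 \<circ> P"
    unfolding P_def A1_def A2_def using YBE_A[of \<gamma> "x - \<mu> j" "y - \<mu> j" j] by simp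
  have s5: "P \<circ> B1 \<circ> B2 = B2 \<circ> B1 \<circ> P"
    unfolding P_def B1_def B2_def using YBE_A[of \<gamma> "x + \<mu> j" "y + \<mu> j" j] by simp
  have s6a: "A1 \<circ> W2 = W2 \<circ> A1" unfolding W2_def A1_def using comm_R1_M2[OF j1 jn js1] by blast
  have s6b: "W1 \<circ> B2 = B2 \<circ> W1" unfolding W1_def B2_def using comm_M1_R2[OF j1 jn js1] by blast
  have s7: "A1 \<circ> Q \<circ> B2 = B2 \<circ> Q \<circ> A1"
    unfolding A1_def Q_def B2_def by (rule YBE_B[symmetric]) simp
  have "P \<circ> (A1 \<circ> W1 \<circ> B1) \<circ> Q \<circ> (A2 \<circ> W2 \<circ> B2)
      = P \<circ> (A1 \<circ> (W1 \<circ> (B1 \<circ> (Q \<circ> (A2 \<circ> (W2 \<circ> B2))))))" by (simp add: comp_assoc)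
  also have "\<dots> = P \<circ> (A1 \<circ> (W1 \<circ> (A2 \<circ> (Q \<circ> (B1 \<circ> (W2 \<circ> B2))))))" by (simp only: ctx3[OF s1])
  also have "\<dots> = P \<circ> (A1 \<circ> (A2 \<circ> (W1 \<circ> (Q \<circ> (W2 \<circ> (B1 \<circ> B2))))))"
    by (simp only: ctx2[OF s2a] ctx2[OF s2b])
  also have "\<dots> = A2 \<circ> (A1 \<circ> (P \<circ> (W1 \<circ> (Q \<circ> (W2 \<circ> (B1 \<circ> B2))))))" by (simp only: ctx3[OF s3])
  also have "\<dots> = A2 \<circ> (A1 \<circ> (W2 \<circ> (Q \<circ> (W1 \<circ> (P \<circ> (B1 \<circ> B2))))))" by (simp only: ctx4[OF IH])
  also have "\<dots> = A2 \<circ> (A1 \<circ> (W2 \<circ> (Q \<circ> (W1 \<circ> (B2 \<circ> (B1 \<circ> P))))))" by (simp only: ctx3e[OF s5])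
  also have "\<dots> = A2 \<circ> (W2 \<circ> (A1 \<circ> (Q \<circ> (B2 \<circ> (W1 \<circ> (B1 \<circ> P))))))"
    by (simp only: ctx2[OF s6a] ctx2[OF s6b])
  also have "\<dots> = A2 \<circ> (W2 \<circ> (B2 \<circ> (Q \<circ> (A1 \<circ> (W1 \<circ> (B1 \<circ> P))))))" by (simp only: ctx3[OF s7])
  also have "\<dots> = (A2 \<circ> W2 \<circ> B2) \<circ> Q \<circ> (A1 \<circ> W1 \<circ> B1) \<circ> P" by (simp add: comp_assoc)
  finally show ?case
    unfolding P_def Q_def A1_def B1_def A2_def B2_def W1_def W2_def
    by (simp only: Mr.simps Lift1_comp Lift2_comp comp_assoc)
qed


definition lin :: "(('a \<Rightarrow> complex) \<Rightarrow> ('b \<Rightarrow> complex)) \<Rightarrow> bool" where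
  "lin F \<longleftrightarrow> (\<forall>f g. F (\<lambda>z. f z + g z) = (\<lambda>z. F f z + F g z)) \<and> (\<forall>c f. F (\<lambda>z. c * f z) = (\<lambda>z. c * F f z))"

lemma lin_comp: "lin F \<Longrightarrow> lin G \<Longrightarrow> lin (F \<circ> G)"
  by (simp add: lin_def)

lemma lin_Rr: "lin (Rr \<gamma> x j)"
  unfolding lin_def
  by (auto simp: Rr_def fun_eq_iff sum.distrib sum_distrib_left algebra_simps)

lemma lin_Kop: "lin (Kop h x)"
  unfolding lin_def
  by (auto simp: Kop_def fun_eq_iff algebra_simps)

lemma lin_Mr: "lin (Mr \<gamma> h \<mu> x js)"
  by (induction js) (auto simp only: Mr.simps lin_Kop intro!: lin_comp lin_Rr)

lemma lin_add: "lin F \<Longrightarrow> F (\<lambda>z. f z + g z) = (\<lambda>z. F f z + F g z)"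
  by (simp add: lin_def)
lemma lin_scale: "lin F \<Longrightarrow> F (\<lambda>z. c * f z) = (\<lambda>z. c * F f z)"
  by (simp add: lin_def)
lemma lin_zero: "lin F \<Longrightarrow> F (\<lambda>z. 0) = (\<lambda>z. 0)"
  using lin_scale[of F 0 "\<lambda>z. 0"] by simp
lemma lin_sum: assumes l: "lin F" and fin: "finite S"
  shows "F (\<lambda>z. \<Sum>k\<in>S. f k z) = (\<lambda>z. \<Sum>k\<in>S. F (f k) z)"
  using fin
proof (induction S rule: finite_induct)
  case empty
  then show ?case by (simp add: lin_zero[OF l])
next
  case (insert x F')
  then show ?case by (simp add: lin_add[OF l])
qed
lemma lin_minus: "lin F \<Longrightarrow> F (\<lambda>z. f z - g z) = (\<lambda>z. F f z - F g z)"
proof -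
  assume l: "lin F"
  have "F (\<lambda>z. f z - g z) = F (\<lambda>z. f z + (-1) * g z)" by simp
  also have "\<dots> = (\<lambda>z. F f z - F g z)" by (simp only: lin_add[OF l] lin_scale[OF l]) simp
  finally show ?thesis .
qed

definition Er :: "complex \<Rightarrow> complex \<Rightarrow> (nat \<Rightarrow> complex) \<Rightarrow> nat list \<Rightarrow> bool \<Rightarrow> bool \<Rightarrow> complex \<Rightarrow> qstate \<Rightarrow> qstate" where
  "Er \<gamma> h \<mu> js i j x \<phi> = (\<lambda>s. Mr \<gamma> h \<mu> x js (\<lambda>(a, s'). if a = j then \<phi> s' else 0) (i, s))"

lemma lin_Er: "lin (Er \<gamma> h \<mu> js i j x)"
proof -
  have l: "lin (Mr \<gamma> h \<mu> x js)" by (rule lin_Mr)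
  have e1: "(\<lambda>(a, s'). if a = j then f s' + g s' else 0) = (\<lambda>z. (\<lambda>(a, s'). if a = j then f s' else 0) z + (\<lambda>(a, s'). if a = j then g s' else 0) z)" for f g :: qstate
    by (auto simp: fun_eq_iff)
  have e2: "(\<lambda>(a, s'). if a = j then c * f s' else 0) = (\<lambda>z. c * (\<lambda>(a, s'). if a = j then f s' else 0) z)" for c and f :: qstate
    by (auto simp: fun_eq_iff)
  show ?thesis unfolding lin_def Er_def
    by (simp only: e1 e2 lin_add[OF l] lin_scale[OF l]) simp
qed

lemma Mr_decomp: "Mr \<gamma> h \<mu> x js f (i, s) = (\<Sum>b\<in>UNIV. Er \<gamma> h \<mu> js i b x (\<lambda>s'. f (b, s')) s)"
proof -
  have l: "lin (Mr \<gamma> h \<mu> x js)" by (rule lin_Mr)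
  have "f = (\<lambda>z. \<Sum>b\<in>UNIV. (\<lambda>(a, s'). if a = b then f (b, s') else 0) z)"
    by (auto simp: fun_eq_iff UNIV_bool_sum)
  then have "Mr \<gamma> h \<mu> x js f = Mr \<gamma> h \<mu> x js (\<lambda>z. \<Sum>b\<in>UNIV. (\<lambda>(a, s'). if a = b then f (b, s') else 0) z)"
    by simp
  also have "\<dots> = (\<lambda>z. \<Sum>b\<in>UNIV. Mr \<gamma> h \<mu> x js (\<lambda>(a, s'). if a = b then f (b, s') else 0) z)"
    by (rule lin_sum[OF l finite])
  finally have "Mr \<gamma> h \<mu> x js f = (\<lambda>z. \<Sum>b\<in>UNIV. Mr \<gamma> h \<mu> x js (\<lambda>(a, s'). if a = b then f (b, s') else 0) z)" .
  then show ?thesis by (simp add: Er_def)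
qed

lemma Lift1_Mr: "Lift1 (Mr \<gamma> h \<mu> x js) \<Psi> (a1, a2, s) = (\<Sum>b\<in>UNIV. Er \<gamma> h \<mu> js a1 b x (\<lambda>s'. \<Psi> (b, a2, s')) s)"
  by (simp add: Lift1_def Mr_decomp)
lemma Lift2_Mr: "Lift2 (Mr \<gamma> h \<mu> x js) \<Psi> (a1, a2, s) = (\<Sum>b\<in>UNIV. Er \<gamma> h \<mu> js a2 b x (\<lambda>s'. \<Psi> (a1, b, s')) s)"
  by (simp add: Lift2_def Mr_decomp)

lemma Er_add: "Er \<gamma> h \<mu> js i j x (\<lambda>s. f s + g s) = (\<lambda>s. Er \<gamma> h \<mu> js i j x f s + Er \<gamma> h \<mu> js i j x g s)"
  by (rule lin_add[OF lin_Er])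
lemma Er_scale: "Er \<gamma> h \<mu> js i j x (\<lambda>s. c * f s) = (\<lambda>s. c * Er \<gamma> h \<mu> js i j x f s)"
  by (rule lin_scale[OF lin_Er])
lemma Er_zero: "Er \<gamma> h \<mu> js i j x (\<lambda>s. 0) = (\<lambda>s. 0)"
  by (rule lin_zero[OF lin_Er])

lemma RE_comp:
  assumes "distinct js" "\<forall>k\<in>set js. k \<ge> 1"
  shows "R12 \<gamma> (x - y) (Lift1 (Mr \<gamma> h \<mu> x js) (R12 \<gamma> (x + y) (Lift2 (Mr \<gamma> h \<mu> y js) \<Psi>))) z
       = Lift2 (Mr \<gamma> h \<mu> y js) (R12 \<gamma> (x + y) (Lift1 (Mr \<gamma> h \<mu> x js) (R12 \<gamma> (x - y) \<Psi>))) z"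
  using fun_cong[OF fun_cong[OF RE[OF assms, of \<gamma> x y h \<mu>], of \<Psi>], of z] by simp


lemma comp_gen:
  fixes js :: "nat list"
  assumes "distinct js" "\<forall>k\<in>set js. k \<ge> 1"
  shows "R12 \<gamma> (x - y) (Lift1 (Mr \<gamma> h \<mu> x js) (R12 \<gamma> (x + y) (Lift2 (Mr \<gamma> h \<mu> y js) (\<lambda>(b1,b2,s'). if b1 = j1 \<and> b2 = j2 then \<phi> s' else 0)))) (i1, i2, s)
       = Lift2 (Mr \<gamma> h \<mu> y js) (R12 \<gamma> (x + y) (Lift1 (Mr \<gamma> h \<mu> x js) (R12 \<gamma> (x - y) (\<lambda>(b1,b2,s'). if b1 = j1 \<and> b2 = j2 then \<phi> s' else 0)))) (i1, i2, s)"
    by (rule RE_comp[OF assms])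


definition pc :: "(complex \<Rightarrow> 'a \<Rightarrow> complex) \<Rightarrow> bool" where
  "pc F \<longleftrightarrow> (\<forall>z. continuous_on UNIV (\<lambda>y. F y z))"

lemma cont_if: "continuous_on S f \<Longrightarrow> continuous_on S g \<Longrightarrow> continuous_on S (\<lambda>x. if P then f x else g x)"
  by (cases P) auto

lemma cont_Rent: "continuous_on UNIV e \<Longrightarrow> continuous_on UNIV (\<lambda>y. Rent \<gamma> (e y) p q)"
  unfolding Rent_def wa_def wb_def wc_def
  by (auto simp: split_beta intro!: continuous_intros cont_if)

lemma pc_Rr: "pc F \<Longrightarrow> continuous_on UNIV e \<Longrightarrow> pc (\<lambda>y. Rr \<gamma> (e y) j (F y))"
  unfolding pc_def Rr_def
  by (auto intro!: continuous_intros cont_if cont_Rent simp: split_beta)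

lemma pc_Kop: "pc F \<Longrightarrow> continuous_on UNIV e \<Longrightarrow> pc (\<lambda>y. Kop h (e y) (F y))"
  unfolding pc_def Kop_def
  by (auto intro!: continuous_intros cont_if simp: split_beta)

lemma pc_Mr: "pc F \<Longrightarrow> continuous_on UNIV e \<Longrightarrow> pc (\<lambda>y. Mr \<gamma> h \<mu> (e y) js (F y))"
proof (induction js arbitrary: F)
  case Nil
  then show ?case by (simp add: pc_Kop)
next
  case (Cons j js)
  have c1: "continuous_on UNIV (\<lambda>y. e y + \<mu> j)" "continuous_on UNIV (\<lambda>y. e y - \<mu> j)"
    using Cons.prems by (auto intro!: continuous_intros cont_if)
  have "pc (\<lambda>y. Rr \<gamma> (e y + \<mu> j) j (F y))" by (rule pc_Rr[OF Cons.prems(1) c1(1)])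
  then have "pc (\<lambda>y. Mr \<gamma> h \<mu> (e y) js (Rr \<gamma> (e y + \<mu> j) j (F y)))" using Cons.IH Cons.prems(2) by blast
  then have "pc (\<lambda>y. Rr \<gamma> (e y - \<mu> j) j (Mr \<gamma> h \<mu> (e y) js (Rr \<gamma> (e y + \<mu> j) j (F y))))"
    by (rule pc_Rr[OF _ c1(2)])
  then show ?case by simp
qed

lemma pc_Er_arg: "pc G \<Longrightarrow> pc (\<lambda>y. Er \<gamma> h \<mu> js i j x (G y))"
proof -
  assume g: "pc G"
  have "pc (\<lambda>y. (\<lambda>(a, s'). if a = j then G y s' else 0) :: fstate)"
    using g unfolding pc_def by (auto simp: split_beta intro!: continuous_intros cont_if)
  from pc_Mr[OF this, of "\<lambda>y. x"] show ?thesis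
    unfolding pc_def Er_def by auto
qed

lemma pc_Er_par: "pc (\<lambda>y. Er \<gamma> h \<mu> js i j y \<phi>)"
proof -
  have "pc (\<lambda>y. (\<lambda>(a, s'). if a = j then \<phi> s' else 0) :: fstate)"
    unfolding pc_def by auto
  from pc_Mr[OF this, of "\<lambda>y. y"] show ?thesis
    unfolding pc_def Er_def by auto
qed

lemma pc_Er_par_arg: "pc G \<Longrightarrow> pc (\<lambda>y. Er \<gamma> h \<mu> js i j y (G y))"
proof -
  assume g: "pc G"
  have "pc (\<lambda>y. (\<lambda>(a, s'). if a = j then G y s' else 0) :: fstate)"
    using g unfolding pc_def by (auto simp: split_beta intro!: continuous_intros cont_if)
  from pc_Mr[OF this, of "\<lambda>y. y"] show ?thesis
    unfolding pc_def Er_def by auto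
qed

lemma sinh_zero_unique:
  fixes w :: complex and r1 r2 :: real
  assumes "sinh (w + of_real r1) = 0" "sinh (w + of_real r2) = 0"
  shows "r1 = r2"
proof -
  have e: "exp z * exp z = 1" if "sinh z = 0" for z :: complex
  proof -
    from that have "exp z = exp (- z)" by (simp add: sinh_field_def)
    then have "exp z * exp z = exp z * exp (-z)" by simp
    also have "\<dots> = 1" by (rule exp_minus_inverse)
    finally show ?thesis .
  qed
  have x: "exp (w + of_real r) * exp (w + of_real r) = (exp w * exp w) * of_real (exp r * exp r)" for r
    by (simp add: exp_add exp_of_real mult_ac)
  have "(exp w * exp w) * of_real (exp r1 * exp r1) = (exp w * exp w) * of_real (exp r2 * exp r2)"
    using e[OF assms(1)] e[OF assms(2)] x[of r1] x[of r2] by simp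
  then have "of_real (exp r1 * exp r1) = (of_real (exp r2 * exp r2) :: complex)"
    by (simp del: of_real_mult)
  then have "exp r1 * exp r1 = exp r2 * exp r2" by (simp only: of_real_eq_iff)
  then have "(exp r1)\<^sup>2 = (exp r2)\<^sup>2" by (simp add: power2_eq_square)
  then have "exp r1 = exp r2" by (simp add: power2_eq_iff_nonneg)
  then show ?thesis by simp
qed

lemma eventually_sinh_nonzero:
  fixes y k :: complex
  shows "eventually (\<lambda>n. sinh (y + of_real (inverse (real (Suc n))) + k) \<noteq> 0) sequentially"
proof (cases "\<exists>m. sinh (y + of_real (inverse (real (Suc m))) + k) = 0")
  case False
  then show ?thesis by auto
next
  case True
  then obtain m where m: "sinh (y + of_real (inverse (real (Suc m))) + k) = 0" by blast
  show ?thesis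
  proof (rule eventually_sequentiallyI[of "Suc m"])
    fix n assume n: "Suc m \<le> n"
    show "sinh (y + of_real (inverse (real (Suc n))) + k) \<noteq> 0"
    proof
      assume z: "sinh (y + of_real (inverse (real (Suc n))) + k) = 0"
      have "inverse (real (Suc m)) = inverse (real (Suc n))"
        by (rule sinh_zero_unique[of "y + k"]) (use m z in \<open>simp_all add: algebra_simps\<close>)
      then show False using n by simp
    qed
  qed
qed

lemma zero_by_cont2:
  fixes G :: "complex \<Rightarrow> complex"
  assumes cont: "continuous_on UNIV G"
    and gen: "\<And>y. sinh (y + k1) \<noteq> 0 \<Longrightarrow> sinh (y + k2) \<noteq> 0 \<Longrightarrow> G y = 0"
  shows "G y = 0"
proof -
  define f where "f n = y + of_real (inverse (real (Suc n)))" for n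
  have lim: "f \<longlonglongrightarrow> y"
  proof -
    have "(\<lambda>n. of_real (inverse (real (Suc n))) :: complex) \<longlonglongrightarrow> of_real 0"
      by (rule tendsto_of_real[OF LIMSEQ_inverse_real_of_nat])
    then have "(\<lambda>n. y + of_real (inverse (real (Suc n)))) \<longlonglongrightarrow> y + 0"
      by (intro tendsto_add tendsto_const) (simp only: of_real_0)
    then show ?thesis unfolding f_def by simp
  qed
  have "(\<lambda>n. G (f n)) \<longlonglongrightarrow> G y"
    by (rule continuous_on_tendsto_compose[OF cont lim]) auto
  moreover have "eventually (\<lambda>n. G (f n) = 0) sequentially"
    using eventually_conj[OF eventually_sinh_nonzero[of y k1] eventually_sinh_nonzero[of y k2]]
    by eventually_elim (auto simp: f_def gen)
  ultimately have "(\<lambda>n. 0::complex) \<longlonglongrightarrow> G y"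
    using tendsto_cong[of "\<lambda>n. G (f n)" "\<lambda>n. 0" sequentially "G y"] by simp
  then show ?thesis by (simp add: LIMSEQ_const_iff)
qed


locale chain =
  fixes \<gamma> h :: complex and \<mu> :: "nat \<Rightarrow> complex" and js :: "nat list"
  assumes dj: "distinct js" and pos: "\<forall>k\<in>set js. k \<ge> 1"
begin

abbreviation "E \<equiv> Er \<gamma> h \<mu> js"
abbreviation "a \<equiv> wa \<gamma>"
abbreviation "c \<equiv> wc \<gamma>"

lemma E2raw: "a (x - y) * wb (x + y) * E False True x (E False False y \<phi>) s =
   a (x + y) * wb (x - y) * E False False y (E False True x \<phi>) s
   + wb (x + y) * c * E False True y (E False False x \<phi>) s
   + c * wb (x - y) * E False True y (E True True x \<phi>) s"
  using comp_gen[OF dj pos, of \<gamma> x y h \<mu> True False \<phi> False False s]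
  apply (simp only: R12_def Lift1_Mr Lift2_Mr split_conv UNIV_bool_sum)
  apply (simp add: Rent_def Er_add Er_scale Er_zero)
  apply (simp add: algebra_simps)
  done

lemma E4raw: "c * c * E False False x (E False True y \<phi>) s + c * a (x + y) * E False True x (E True True y \<phi>) s
   + wb (x - y) * wb (x + y) * E True True x (E False True y \<phi>) s
   = c * a (x - y) * E False False y (E False True x \<phi>) s + a (x + y) * a (x - y) * E False True y (E True True x \<phi>) s"
  using comp_gen[OF dj pos, of \<gamma> x y h \<mu> True True \<phi> True False s]
  apply (simp only: R12_def Lift1_Mr Lift2_Mr split_conv UNIV_bool_sum)
  apply (simp add: Rent_def Er_add Er_scale Er_zero)
  apply (simp add: algebra_simps)
  done

lemma BBraw: "a (x - y) * wb (x + y) * (E False True x (E False True y \<phi>) s - E False True y (E False True x \<phi>) s) = 0"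
  using comp_gen[OF dj pos, of \<gamma> x y h \<mu> True True \<phi> False False s]
  apply (simp only: R12_def Lift1_Mr Lift2_Mr split_conv UNIV_bool_sum)
  apply (simp add: Rent_def Er_add Er_scale Er_zero)
  done

end

lemma wb_swap: "wb (y - x) = - wb (x - y)"
  unfolding wb_def by (metis minus_diff_eq sinh_minus)
lemma wb_comm: "wb (y + x) = wb (x + y)" by (simp add: add.commute)
lemma wa_comm: "wa g (y + x) = wa g (x + y)" by (simp add: add.commute)

lemma Id0: "wb (x + y) * wa g (2 * y) = wb (2 * y) * wa g (x + y) + wc g * wb (x - y)"
  unfolding wa_def wb_def wc_def mult_2 sinh_field_def
  by (simp only: exp_add exp_diff exp_minus) (simp add: field_simps, (simp add: algebra_simps)?)
lemma Id1: "wa g (x - y) * wa g (x + y) - wb (x - y) * wb (x + y) = wc g * wa g (2 * x)"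
  unfolding wa_def wb_def wc_def mult_2 sinh_field_def
  by (simp only: exp_add exp_diff exp_minus) (simp add: field_simps, (simp add: algebra_simps)?)
lemma Id2: "wa g (x + y) * wa g (x + y) - wc g * wc g = wb (x + y) * wa g (x + y + g)"
  unfolding wa_def wb_def wc_def mult_2 sinh_field_def
  by (simp only: exp_add exp_diff exp_minus) (simp add: field_simps, (simp add: algebra_simps)?)
lemma Id3: "wb (x - y) * wa g (x + y + g) = wc g * wa g (2 * x) - wa g (x + y) * wa g (y - x)"
  unfolding wa_def wb_def wc_def mult_2 sinh_field_def
  by (simp only: exp_add exp_diff exp_minus) (simp add: field_simps, (simp add: algebra_simps)?)
lemma Id4: "wb (x + y) * wa g (2 * x + g) = wa g (2 * x) * wa g (x + y) - wc g * wa g (x - y)"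
  unfolding wa_def wb_def wc_def mult_2 sinh_field_def
  by (simp only: exp_add exp_diff exp_minus) (simp add: field_simps, (simp add: algebra_simps)?)
lemma Id5: "- wb (x - y) * wa g (2 * x + g) * (wc g * wa g (x + y) + wb (2 * y) * wb (x - y))
     = wa g (x - y) * wa g (2 * y) * (wc g * wa g (x + y) - wa g (x - y) * wa g (2 * x))"
  unfolding wa_def wb_def wc_def mult_2 sinh_field_def
  by (simp only: exp_add exp_diff exp_minus) (simp add: field_simps, (simp add: algebra_simps)?)

lemma ring_XA:
  fixes bm ap a2y amr bp c b2y AxBy ByAx BxAy BxDy :: complex
  assumes h0: "bp * a2y = b2y * ap + c * bm"
  shows "bm * ap * a2y * AxBy
     - (- amr * bp * a2y * ByAx + c * b2y * ap * BxAy - c * bm * (a2y * BxDy - c * BxAy))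
   = a2y * (amr * bp * ByAx - (ap * (- bm) * AxBy + bp * c * BxAy + c * (- bm) * BxDy))"
proof -
  have "bm * ap * a2y * AxBy
     - (- amr * bp * a2y * ByAx + c * b2y * ap * BxAy - c * bm * (a2y * BxDy - c * BxAy))
   - a2y * (amr * bp * ByAx - (ap * (- bm) * AxBy + bp * c * BxAy + c * (- bm) * BxDy))
    = c * BxAy * (bp * a2y - (b2y * ap + c * bm))"
    by (simp add: algebra_simps)
  then show ?thesis using h0 by simp
qed

lemma ring_XD:
  fixes am ap bm bp a2x a2y b2y c A2 A3 amr AxBy ByAx BxAy BxDy ByDx AyBx DxBy :: complex
  assumes h1: "am * ap - bm * bp = c * a2x"
    and h2: "ap * ap - c * c = bp * A3"
    and h3: "bm * A3 = c * a2x - ap * amr"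
    and h4: "bp * A2 = a2x * ap - c * am"
    and h5: "- bm * A2 * (c * ap + b2y * bm) = am * a2y * (c * ap - am * a2x)"
  shows "bm * bp * (bm * ap * a2y * (a2x * DxBy - c * AxBy)) - bm * bp * (am * A3 * a2y * (a2x * ByDx - c * ByAx)
            - c * A2 * ap * (a2y * BxDy - c * BxAy) + c * A2 * b2y * bm * BxAy)
   = (- c * am * a2x * a2y) * (am * bp * BxAy - (ap * bm * AyBx + bp * c * ByAx + c * bm * ByDx))
     + (- c * a2y * am * ap) * (amr * bp * ByAx - (ap * (- bm) * AxBy + bp * c * BxAy + c * (- bm) * BxDy))
     + (bm * ap * a2x * a2y) * (c * c * AxBy + c * ap * BxDy + bm * bp * DxBy - (c * am * AyBx + ap * am * ByDx))"
proof -
  have "bm * bp * (bm * ap * a2y * (a2x * DxBy - c * AxBy)) - bm * bp * (am * A3 * a2y * (a2x * ByDx - c * ByAx)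
            - c * A2 * ap * (a2y * BxDy - c * BxAy) + c * A2 * b2y * bm * BxAy)
   - ((- c * am * a2x * a2y) * (am * bp * BxAy - (ap * bm * AyBx + bp * c * ByAx + c * bm * ByDx))
     + (- c * a2y * am * ap) * (amr * bp * ByAx - (ap * (- bm) * AxBy + bp * c * BxAy + c * (- bm) * BxDy))
     + (bm * ap * a2x * a2y) * (c * c * AxBy + c * ap * BxDy + bm * bp * DxBy - (c * am * AyBx + ap * am * ByDx)))
   = c * bm * ap * a2y * AxBy * ((am * ap - bm * bp) - c * a2x)
     + am * bm * a2x * a2y * ByDx * ((ap * ap - c * c) - bp * A3)
     + c * am * a2y * bp * ByAx * (bm * A3 - (c * a2x - ap * amr))
     + c * bm * ap * a2y * BxDy * (bp * A2 - (a2x * ap - c * am))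
     + c * bp * BxAy * (- bm * A2 * (c * ap + b2y * bm) - am * a2y * (c * ap - am * a2x))"
    by (simp add: algebra_simps)
  then show ?thesis using h1 h2 h3 h4 h5 by simp
qed


context chain begin

definition Dh :: "complex \<Rightarrow> qstate \<Rightarrow> qstate" where
  "Dh x \<phi> = (\<lambda>s. a (2 * x) * E True True x \<phi> s - c * E False False x \<phi> s)"

lemma E_Dh: "E i j x (Dh y \<phi>) s = a (2 * y) * E i j x (E True True y \<phi>) s - c * E i j x (E False False y \<phi>) s"
proof -
  have l: "lin (E i j x)" by (rule lin_Er)
  have "E i j x (Dh y \<phi>) = (\<lambda>s. E i j x (\<lambda>s. a (2 * y) * E True True y \<phi> s) s - E i j x (\<lambda>s. c * E False False y \<phi> s) s)"
    unfolding Dh_def by (rule lin_minus[OF l])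
  then show ?thesis by (simp add: lin_scale[OF l])
qed

lemma cont_EE: "continuous_on UNIV (\<lambda>y. E i j x (E k l y \<phi>) s)"
proof -
  have "pc (\<lambda>y. E i j x (E k l y \<phi>))" by (rule pc_Er_arg[OF pc_Er_par])
  then show ?thesis unfolding pc_def by blast
qed
lemma cont_E: "continuous_on UNIV (\<lambda>y. E i j y \<psi> s)"
proof -
  have "pc (\<lambda>y. E i j y \<psi>)" by (rule pc_Er_par)
  then show ?thesis unfolding pc_def by blast
qed

lemma XB: "E False True x (E False True y \<phi>) s = E False True y (E False True x \<phi>) s"
proof -
  let ?G = "\<lambda>y. E False True x (E False True y \<phi>) s - E False True y (E False True x \<phi>) s"
  have cont: "continuous_on UNIV ?G" by (rule continuous_on_diff[OF cont_EE cont_E])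
  have "?G y = 0"
  proof (rule zero_by_cont2[OF cont, of "- x - \<gamma>" x])
    fix y assume n1: "sinh (y + (- x - \<gamma>)) \<noteq> 0" and n2: "sinh (y + x) \<noteq> 0"
    have f1: "a (x - y) \<noteq> 0"
    proof -
      have "a (x - y) = sinh (- (y + (- x - \<gamma>)))" unfolding wa_def
        by (rule arg_cong[where f=sinh]) (simp add: algebra_simps)
      then have "a (x - y) = - sinh (y + (- x - \<gamma>))" by (simp only: sinh_minus)
      then show ?thesis using n1 by simp
    qed
    have f2: "wb (x + y) \<noteq> 0" using n2 by (simp add: wb_def add.commute)
    show "?G y = 0" using BBraw[of x y \<phi> s] f1 f2 by simp
  qed
  then show ?thesis by simp
qed

lemma XA: "wb (x - y) * a (x + y) * a (2 * y) * E False False x (E False True y \<phi>) s =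
    - a (y - x) * wb (x + y) * a (2 * y) * E False True y (E False False x \<phi>) s
    + c * wb (2 * y) * a (x + y) * E False True x (E False False y \<phi>) s
    - c * wb (x - y) * E False True x (Dh y \<phi>) s"
proof -
  have e: "a (y - x) * wb (x + y) * E False True y (E False False x \<phi>) s =
    a (x + y) * (- wb (x - y)) * E False False x (E False True y \<phi>) s
    + wb (x + y) * c * E False True x (E False False y \<phi>) s
    + c * (- wb (x - y)) * E False True x (E True True y \<phi>) s"
    using E2raw[of y x \<phi> s] unfolding wb_swap[of y x] wb_comm[of y x] wa_comm[of \<gamma> y x] .
  note r = ring_XA[OF Id0[of x y \<gamma>], where AxBy = "E False False x (E False True y \<phi>) s"
      and ByAx = "E False True y (E False False x \<phi>) s" and BxAy = "E False True x (E False False y \<phi>) s"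
      and BxDy = "E False True x (E True True y \<phi>) s" and amr = "a (y - x)"]
  have z: "a (y - x) * wb (x + y) * E False True y (E False False x \<phi>) s -
    (a (x + y) * (- wb (x - y)) * E False False x (E False True y \<phi>) s
    + wb (x + y) * c * E False True x (E False False y \<phi>) s
    + c * (- wb (x - y)) * E False True x (E True True y \<phi>) s) = 0"
    using e by (simp only: right_minus_eq)
  have "wb (x - y) * a (x + y) * a (2 * y) * E False False x (E False True y \<phi>) s -
    (- a (y - x) * wb (x + y) * a (2 * y) * E False True y (E False False x \<phi>) s
    + c * wb (2 * y) * a (x + y) * E False True x (E False False y \<phi>) s
    - c * wb (x - y) * (a (2 * y) * E False True x (E True True y \<phi>) s - c * E False True x (E False False y \<phi>) s)) = 0"
    using r unfolding z by simp
  then show ?thesis unfolding E_Dh by (simp only: right_minus_eq)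
qed


lemma XD: "wb (x - y) * a (x + y) * a (2 * y) * Dh x (E False True y \<phi>) s =
    a (x - y) * a (x + y + \<gamma>) * a (2 * y) * E False True y (Dh x \<phi>) s
    - c * a (2 * x + \<gamma>) * a (x + y) * E False True x (Dh y \<phi>) s
    + c * a (2 * x + \<gamma>) * wb (2 * y) * wb (x - y) * E False True x (E False False y \<phi>) s"
proof -
  define G where "G y = wb (x - y) * a (x + y) * a (2 * y) * (a (2 * x) * E True True x (E False True y \<phi>) s - c * E False False x (E False True y \<phi>) s)
    - (a (x - y) * a (x + y + \<gamma>) * a (2 * y) * (a (2 * x) * E False True y (E True True x \<phi>) s - c * E False True y (E False False x \<phi>) s)
    - c * a (2 * x + \<gamma>) * a (x + y) * (a (2 * y) * E False True x (E True True y \<phi>) s - c * E False True x (E False False y \<phi>) s)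
    + c * a (2 * x + \<gamma>) * wb (2 * y) * wb (x - y) * E False True x (E False False y \<phi>) s)" for y
  have cont: "continuous_on UNIV G"
    unfolding G_def wa_def wb_def wc_def
    by (intro continuous_on_diff continuous_on_add continuous_on_mult continuous_on_const continuous_on_id
        continuous_on_sinh cont_EE cont_E)
  have gen: "G y = 0" if n1: "sinh (y + - x) \<noteq> 0" and n2: "sinh (y + x) \<noteq> 0" for y
  proof -
    have f1: "wb (x - y) \<noteq> 0"
    proof -
      have "wb (x - y) = sinh (- (y + - x))" unfolding wb_def
        by (rule arg_cong[where f=sinh]) (simp add: algebra_simps)
      then have "wb (x - y) = - sinh (y + - x)" by (simp only: sinh_minus)
      then show ?thesis using n1 by simp
    qed
    have f2: "wb (x + y) \<noteq> 0" using n2 by (simp add: wb_def add.commute)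
    have e1: "a (x - y) * wb (x + y) * E False True x (E False False y \<phi>) s -
      (a (x + y) * wb (x - y) * E False False y (E False True x \<phi>) s + wb (x + y) * c * E False True y (E False False x \<phi>) s
       + c * wb (x - y) * E False True y (E True True x \<phi>) s) = 0"
      using E2raw[of x y \<phi> s] by (simp only: right_minus_eq)
    have e2: "a (y - x) * wb (x + y) * E False True y (E False False x \<phi>) s -
      (a (x + y) * (- wb (x - y)) * E False False x (E False True y \<phi>) s
       + wb (x + y) * c * E False True x (E False False y \<phi>) s
       + c * (- wb (x - y)) * E False True x (E True True y \<phi>) s) = 0"
      using E2raw[of y x \<phi> s] unfolding wb_swap[of y x] wb_comm[of y x] wa_comm[of \<gamma> y x] by (simp only: right_minus_eq)
    have e3: "c * c * E False False x (E False True y \<phi>) s + c * a (x + y) * E False True x (E True True y \<phi>) s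
      + wb (x - y) * wb (x + y) * E True True x (E False True y \<phi>) s
      - (c * a (x - y) * E False False y (E False True x \<phi>) s + a (x + y) * a (x - y) * E False True y (E True True x \<phi>) s) = 0"
      using E4raw[of x y \<phi> s] by (simp only: right_minus_eq)
    note r = ring_XD[OF Id1[of \<gamma> x y] Id2[of \<gamma> x y] Id3[of x y \<gamma>] Id4[of x y \<gamma>] Id5[of x y \<gamma>],
        where AxBy = "E False False x (E False True y \<phi>) s" and ByAx = "E False True y (E False False x \<phi>) s"
        and BxAy = "E False True x (E False False y \<phi>) s" and BxDy = "E False True x (E True True y \<phi>) s"
        and ByDx = "E False True y (E True True x \<phi>) s" and AyBx = "E False False y (E False True x \<phi>) s"
        and DxBy = "E True True x (E False True y \<phi>) s"]
    have "wb (x - y) * wb (x + y) * G y = 0"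
      using r unfolding e1 e2 e3 G_def by (simp add: algebra_simps)
    then show ?thesis using f1 f2 by simp
  qed
  have "G y = 0" by (rule zero_by_cont2[OF cont, of "- x" x]) (rule gen)
  then show ?thesis unfolding E_Dh unfolding Dh_def G_def by (simp only: right_minus_eq)
qed

end

lemma upd_same: "i < length s \<Longrightarrow> s ! i = v \<Longrightarrow> s[i := v] = s"
  by (metis list_update_id)

definition vj :: "nat \<Rightarrow> qstate \<Rightarrow> bool" where
  "vj j \<omega> \<longleftrightarrow> (\<forall>s. \<omega> s \<noteq> 0 \<longrightarrow> j - 1 < length s \<and> s ! (j - 1) = False)"

definition zsite :: "nat \<Rightarrow> fstate \<Rightarrow> bool" where
  "zsite j f \<longleftrightarrow> (\<forall>a s. j - 1 < length s \<longrightarrow> s ! (j - 1) \<longrightarrow> f (a, s) = 0)"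

lemma zsite_Rr: "zsite j f \<Longrightarrow> k \<ge> 1 \<Longrightarrow> j \<ge> 1 \<Longrightarrow> k \<noteq> j \<Longrightarrow> zsite j (Rr \<gamma> x k f)"
  unfolding zsite_def Rr_def by (auto simp: nth_list_update_neq)

lemma zsite_Kop: "zsite j f \<Longrightarrow> zsite j (Kop h x f)"
  unfolding zsite_def Kop_def by auto

lemma zsite_Mr: "zsite j f \<Longrightarrow> j \<ge> 1 \<Longrightarrow> j \<notin> set js \<Longrightarrow> \<forall>k\<in>set js. k \<ge> 1 \<Longrightarrow> zsite j (Mr \<gamma> h \<mu> x js f)"
proof (induction js arbitrary: f)
  case Nil
  then show ?case by (simp add: zsite_Kop)
next
  case (Cons k js)
  have "zsite j (Rr \<gamma> (x + \<mu> k) k f)" using Cons.prems by (intro zsite_Rr) auto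
  then have "zsite j (Mr \<gamma> h \<mu> x js (Rr \<gamma> (x + \<mu> k) k f))" using Cons by simp
  then have "zsite j (Rr \<gamma> (x - \<mu> k) k (Mr \<gamma> h \<mu> x js (Rr \<gamma> (x + \<mu> k) k f)))" using Cons.prems by (intro zsite_Rr) auto
  then show ?case by simp
qed

lemma Rr_vacA:
  assumes "vj j \<omega>"
  shows "Rr \<gamma> x j (\<lambda>(a, s). if a then 0 else \<omega> s) = (\<lambda>(a, s). if a then 0 else wa \<gamma> x * \<omega> s)"
proof (rule ext, clarify)
  fix a s
  have w: "\<omega> s' = 0" if "\<not> (j - 1 < length s' \<and> s' ! (j - 1) = False)" for s'
    using assms that unfolding vj_def by blast
  show "Rr \<gamma> x j (\<lambda>(a, s). if a then 0 else \<omega> s) (a, s) = (if a then 0 else wa \<gamma> x * \<omega> s)"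
  proof (cases "j - 1 < length s")
    case True
    then show ?thesis
      by (cases a; cases "s ! (j - 1)") (auto simp: Rr_def UNIV_bool_sum Rent_def w upd_same)
  next
    case False
    then show ?thesis by (simp add: Rr_def w)
  qed
qed

definition wt :: "nat \<Rightarrow> qstate \<Rightarrow> qstate" where
  "wt j \<omega> s = (if j - 1 < length s \<and> s ! (j - 1) then \<omega> (s[j - 1 := False]) else 0)"

lemma Rr_vacD1:
  assumes "vj j \<omega>"
  shows "Rr \<gamma> x j (\<lambda>(a, s). if a then \<omega> s else 0)
    = (\<lambda>z. wb x * (\<lambda>(a, s). if a then \<omega> s else 0) z + wc \<gamma> * (\<lambda>(a, s). if a then 0 else wt j \<omega> s) z)"
proof (rule ext, clarify)
  fix a s
  have w: "\<omega> s' = 0" if "\<not> (j - 1 < length s' \<and> s' ! (j - 1) = False)" for s'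
    using assms that unfolding vj_def by blast
  show "Rr \<gamma> x j (\<lambda>(a, s). if a then \<omega> s else 0) (a, s) =
     wb x * (if a then \<omega> s else 0) + wc \<gamma> * (if a then 0 else wt j \<omega> s)"
  proof (cases "j - 1 < length s")
    case True
    then show ?thesis
      by (cases a; cases "s ! (j - 1)") (auto simp: Rr_def UNIV_bool_sum Rent_def w upd_same wt_def)
  next
    case False
    then show ?thesis by (simp add: Rr_def w wt_def)
  qed
qed

lemma vj_wt: "vj k \<omega> \<Longrightarrow> k \<ge> 1 \<Longrightarrow> j \<ge> 1 \<Longrightarrow> k \<noteq> j \<Longrightarrow> vj k (wt j \<omega>)"
  unfolding vj_def wt_def
  by (auto simp: nth_list_update_neq split: if_splits)

fun alr :: "complex \<Rightarrow> complex \<Rightarrow> (nat \<Rightarrow> complex) \<Rightarrow> complex \<Rightarrow> nat list \<Rightarrow> complex" where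
  "alr \<gamma> h \<mu> x [] = sinh (h + x)"
| "alr \<gamma> h \<mu> x (j # js) = wa \<gamma> (x - \<mu> j) * wa \<gamma> (x + \<mu> j) * alr \<gamma> h \<mu> x js"

fun der :: "complex \<Rightarrow> complex \<Rightarrow> (nat \<Rightarrow> complex) \<Rightarrow> complex \<Rightarrow> nat list \<Rightarrow> complex" where
  "der \<gamma> h \<mu> x [] = sinh (h - x)"
| "der \<gamma> h \<mu> x (j # js) = wb (x - \<mu> j) * wb (x + \<mu> j) * der \<gamma> h \<mu> x js + wc \<gamma> * wc \<gamma> * alr \<gamma> h \<mu> x js"

lemma vac_main:
  assumes "distinct js" "\<forall>k\<in>set js. k \<ge> 1" "\<forall>k\<in>set js. vj k \<omega>"
  shows "Mr \<gamma> h \<mu> x js (\<lambda>(a, s). if a then 0 else \<omega> s) = (\<lambda>(a, s). if a then 0 else alr \<gamma> h \<mu> x js * \<omega> s)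
     \<and> (\<forall>s. Mr \<gamma> h \<mu> x js (\<lambda>(a, s). if a then \<omega> s else 0) (True, s) = der \<gamma> h \<mu> x js * \<omega> s)"
  using assms
proof (induction js arbitrary: \<omega>)
  case Nil
  show ?case by (auto simp: Kop_def fun_eq_iff)
next
  case (Cons j js)
  have j1: "j \<ge> 1" and jn: "j \<notin> set js" and dj: "distinct js" and p1: "\<forall>k\<in>set js. k \<ge> 1"
    and vjj: "vj j \<omega>" and vjs: "\<forall>k\<in>set js. vj k \<omega>"
    using Cons.prems by auto
  have l: "lin (Mr \<gamma> h \<mu> x js)" by (rule lin_Mr)
  have IH: "Mr \<gamma> h \<mu> x js (\<lambda>(a, s). if a then 0 else \<omega>' s) = (\<lambda>(a, s). if a then 0 else alr \<gamma> h \<mu> x js * \<omega>' s)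
     \<and> (\<forall>s. Mr \<gamma> h \<mu> x js (\<lambda>(a, s). if a then \<omega>' s else 0) (True, s) = der \<gamma> h \<mu> x js * \<omega>' s)"
    if "\<forall>k\<in>set js. vj k \<omega>'" for \<omega>'
    using Cons.IH[OF dj p1 that] .
  let ?F0 = "(\<lambda>(a, s). if a then 0 else \<omega> s) :: fstate"
  let ?F1 = "(\<lambda>(a, s). if a then \<omega> s else 0) :: fstate"
  let ?Ft = "(\<lambda>(a, s). if a then 0 else wt j \<omega> s) :: fstate"
  have sc: "(\<lambda>(a, s). if a then 0 else k * \<omega> s) = (\<lambda>z. k * ?F0 z)" for k
    by (auto simp: fun_eq_iff)
  have A: "Mr \<gamma> h \<mu> x (j # js) ?F0 = (\<lambda>(a, s). if a then 0 else alr \<gamma> h \<mu> x (j # js) * \<omega> s)"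
  proof -
    have "Mr \<gamma> h \<mu> x (j # js) ?F0 = Rr \<gamma> (x - \<mu> j) j (Mr \<gamma> h \<mu> x js (Rr \<gamma> (x + \<mu> j) j ?F0))" by simp
    also have "\<dots> = Rr \<gamma> (x - \<mu> j) j (Mr \<gamma> h \<mu> x js (\<lambda>z. wa \<gamma> (x + \<mu> j) * ?F0 z))"
      by (simp only: Rr_vacA[OF vjj] sc)
    also have "\<dots> = Rr \<gamma> (x - \<mu> j) j (\<lambda>z. wa \<gamma> (x + \<mu> j) * Mr \<gamma> h \<mu> x js ?F0 z)"
      by (simp only: lin_scale[OF l])
    also have "\<dots> = Rr \<gamma> (x - \<mu> j) j (\<lambda>z. (wa \<gamma> (x + \<mu> j) * alr \<gamma> h \<mu> x js) * ?F0 z)"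
    proof -
      have "(\<lambda>z. wa \<gamma> (x + \<mu> j) * Mr \<gamma> h \<mu> x js ?F0 z) = (\<lambda>z. (wa \<gamma> (x + \<mu> j) * alr \<gamma> h \<mu> x js) * ?F0 z)"
        using conjunct1[OF IH[OF vjs]] by (auto simp: fun_eq_iff)
      then show ?thesis by (simp only:)
    qed
    also have "\<dots> = (\<lambda>z. (wa \<gamma> (x + \<mu> j) * alr \<gamma> h \<mu> x js) * Rr \<gamma> (x - \<mu> j) j ?F0 z)"
      by (simp only: lin_scale[OF lin_Rr])
    also have "\<dots> = (\<lambda>(a, s). if a then 0 else alr \<gamma> h \<mu> x (j # js) * \<omega> s)"
      by (simp only: Rr_vacA[OF vjj]) (auto simp: fun_eq_iff)
    finally show ?thesis .
  qed
  have vjt: "\<forall>k\<in>set js. vj k (wt j \<omega>)"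
    using vjs p1 j1 jn by (metis vj_wt)
  define \<Phi> where "\<Phi> = (\<lambda>z. wb (x + \<mu> j) * Mr \<gamma> h \<mu> x js ?F1 z + wc \<gamma> * Mr \<gamma> h \<mu> x js ?Ft z)"
  have Phi: "Mr \<gamma> h \<mu> x js (Rr \<gamma> (x + \<mu> j) j ?F1) = \<Phi>"
    unfolding \<Phi>_def by (simp only: Rr_vacD1[OF vjj] lin_add[OF l] lin_scale[OF l])
  have PhiT: "\<Phi> (True, s) = wb (x + \<mu> j) * der \<gamma> h \<mu> x js * \<omega> s" for s
    using IH[OF vjs] IH[OF vjt] unfolding \<Phi>_def by simp
  have zF1: "zsite j ?F1"
    using vjj unfolding zsite_def vj_def by auto
  have zM: "zsite j (Mr \<gamma> h \<mu> x js ?F1)" by (rule zsite_Mr[OF zF1 j1 jn p1])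
  have PhiF: "\<Phi> (False, s) = wc \<gamma> * alr \<gamma> h \<mu> x js * wt j \<omega> s" if "j - 1 < length s" "s ! (j - 1)" for s
  proof -
    have "Mr \<gamma> h \<mu> x js ?F1 (False, s) = 0" using zM that unfolding zsite_def by blast
    then show ?thesis using IH[OF vjt] unfolding \<Phi>_def by (simp add: fun_eq_iff)
  qed
  have w: "\<omega> s' = 0" if "\<not> (j - 1 < length s' \<and> s' ! (j - 1) = False)" for s'
    using vjj that unfolding vj_def by blast
  have D: "Mr \<gamma> h \<mu> x (j # js) ?F1 (True, s) = der \<gamma> h \<mu> x (j # js) * \<omega> s" for s
  proof -
    have "Mr \<gamma> h \<mu> x (j # js) ?F1 (True, s) = Rr \<gamma> (x - \<mu> j) j \<Phi> (True, s)" using Phi by simp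
    also have "\<dots> = der \<gamma> h \<mu> x (j # js) * \<omega> s"
    proof (cases "j - 1 < length s")
      case True
      show ?thesis
      proof (cases "s ! (j - 1)")
        case True
        then show ?thesis using \<open>j - 1 < length s\<close>
          by (simp add: Rr_def UNIV_bool_sum Rent_def PhiT w upd_same)
      next
        case False
        have u: "s[j - 1 := False] = s" using False \<open>j - 1 < length s\<close> by (simp add: upd_same)
        have wtv: "wt j \<omega> (s[j - 1 := True]) = \<omega> s" using \<open>j - 1 < length s\<close> u by (simp add: wt_def)
        have pf: "\<Phi> (False, s[j - 1 := True]) = wc \<gamma> * alr \<gamma> h \<mu> x js * \<omega> s"
          using PhiF[of "s[j - 1 := True]"] \<open>j - 1 < length s\<close> wtv by simp
        have u': "s[j - Suc 0 := False] = s" using u by simp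
        have pf': "\<Phi> (False, s[j - Suc 0 := True]) = wc \<gamma> * alr \<gamma> h \<mu> x js * \<omega> s" using pf by simp
        show ?thesis using False \<open>j - 1 < length s\<close>
          by (simp add: Rr_def UNIV_bool_sum Rent_def PhiT pf' u' algebra_simps)
      qed
    next
      case False
      then show ?thesis by (simp add: Rr_def PhiT w)
    qed
    finally show ?thesis .
  qed
  show ?case using A D by blast
qed


definition K1 :: "complex \<Rightarrow> complex \<Rightarrow> complex \<Rightarrow> complex" where
  "K1 g l y = wc g * wb (2 * y) / (wb (l - y) * wa g (2 * y))"
definition K2 :: "complex \<Rightarrow> complex \<Rightarrow> complex \<Rightarrow> complex" where
  "K2 g l y = - wc g / (wa g (l + y) * wa g (2 * y))"
definition L1 :: "complex \<Rightarrow> complex \<Rightarrow> complex \<Rightarrow> complex" where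
  "L1 g l y = wc g * wa g (2 * l + g) * wb (2 * y) / (wa g (l + y) * wa g (2 * y))"
definition L2 :: "complex \<Rightarrow> complex \<Rightarrow> complex \<Rightarrow> complex" where
  "L2 g l y = - wc g * wa g (2 * l + g) / (wb (l - y) * wa g (2 * y))"

lemma T1:
  assumes n: "wa g (2 * w) \<noteq> 0" "wa g (2 * y) \<noteq> 0" "wa g (l + w) \<noteq> 0" "wa g (w + y) \<noteq> 0"
    "wa g (l + y) \<noteq> 0" "wb (l - w) \<noteq> 0" "wb (l - y) \<noteq> 0" "wb (w - y) \<noteq> 0"
  shows "K1 g l y * F1 g w y = F1 g w l * K1 g l y + K1 g l w * K1 g w y + K2 g l w * L1 g w y"
proof -
  have ee1: "wb (w - l) = - wb (l - w)" "wb (y - w) = - wb (w - y)" by (rule wb_swap)+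
  have ee2: "wa g (w + l) = wa g (l + w)" "wb (w + l) = wb (l + w)"
    "wb (y + w + g) = wa g (w + y)" "wb (l + w + g) = wa g (l + w)"
    by (simp_all add: wa_def wb_def add_ac)
  note ee = ee1 ee2
  have p: "wa g (2 * w) * wa g (l + w) * wa g (w - y) * wb (l - w) * wb (w + y) = - wa g (2 * w) * wa g (w + y) * wa g (w - l) * wb (l + w) * wb (w - y) + wa g (l + w) * wa g (w + y) * wb (2 * w) * wb (l - y) * wc g - wa g (2 * w + g) * wb (l - w) * wb (l - y) * wb (w - y) * wc g"
    unfolding wa_def wb_def wc_def mult_2 sinh_field_def
    by (simp only: exp_add exp_diff exp_minus) (simp add: field_simps, (simp add: algebra_simps)?)
  define D where "D = wa g (2 * w) * wa g (2 * y) * wa g (l + w) * wa g (w + y) * wb (l - w) * wb (l - y) * wb (w - y)"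
  have D0: "D \<noteq> 0" using n unfolding D_def by simp
  have d0: "D * (K1 g l y * F1 g w y) = wa g (2 * w) * wa g (l + w) * wa g (w - y) * wb (2 * y) * wb (l - w) * wb (w + y) * wc g"
    unfolding D_def K1_def K2_def L1_def L2_def F1_def F2_def ee using n by (simp add: field_simps)
  have d1: "D * (F1 g w l * K1 g l y) = - wa g (2 * w) * wa g (w + y) * wa g (w - l) * wb (2 * y) * wb (l + w) * wb (w - y) * wc g"
    unfolding D_def K1_def K2_def L1_def L2_def F1_def F2_def ee using n by (simp add: field_simps)
  have d2: "D * (K1 g l w * K1 g w y) = wa g (l + w) * wa g (w + y) * wb (2 * w) * wb (2 * y) * wb (l - y) * wc g * wc g"
    unfolding D_def K1_def K2_def L1_def L2_def F1_def F2_def ee using n by (simp add: field_simps)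
  have d3: "D * (K2 g l w * L1 g w y) = - wa g (2 * w + g) * wb (2 * y) * wb (l - w) * wb (l - y) * wb (w - y) * wc g * wc g"
    unfolding D_def K1_def K2_def L1_def L2_def F1_def F2_def ee using n by (simp add: field_simps)
  have "D * (K1 g l y * F1 g w y) = D * (F1 g w l * K1 g l y + K1 g l w * K1 g w y + K2 g l w * L1 g w y)"
    unfolding distrib_left d0 d1 d2 d3 using arg_cong[OF p, of "\<lambda>t. (wb (2 * y) * wc g) * t"] by (simp add: algebra_simps)
  then show ?thesis using D0 by simp
qed

lemma T2:
  assumes n: "wa g (2 * w) \<noteq> 0" "wa g (2 * y) \<noteq> 0" "wa g (l + w) \<noteq> 0" "wa g (w + y) \<noteq> 0"
    "wa g (l + y) \<noteq> 0" "wb (l - w) \<noteq> 0" "wb (l - y) \<noteq> 0" "wb (w - y) \<noteq> 0"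
  shows "K2 g l y * F2 g y w = F1 g w l * K2 g l y + K1 g l w * K2 g w y + K2 g l w * L2 g w y"
proof -
  have ee1: "wb (w - l) = - wb (l - w)" "wb (y - w) = - wb (w - y)" by (rule wb_swap)+
  have ee2: "wa g (w + l) = wa g (l + w)" "wb (w + l) = wb (l + w)"
    "wb (y + w + g) = wa g (w + y)" "wb (l + w + g) = wa g (l + w)"
    by (simp_all add: wa_def wb_def add_ac)
  note ee = ee1 ee2
  have p: "wa g (2 * w) * wa g (l + w) * wa g (y + w + g) * wa g (y - w) * wb (l - w) = wa g (2 * w) * wa g (w + y) * wa g (w - l) * wb (l + w) * wb (w - y) - wa g (l + w) * wa g (l + y) * wb (2 * w) * wb (w - y) * wc g + wa g (2 * w + g) * wa g (l + y) * wa g (w + y) * wb (l - w) * wc g"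
    unfolding wa_def wb_def wc_def mult_2 sinh_field_def
    by (simp only: exp_add exp_diff exp_minus) (simp add: field_simps, (simp add: algebra_simps)?)
  define D where "D = wa g (2 * w) * wa g (2 * y) * wa g (l + w) * wa g (l + y) * wa g (w + y) * wb (l - w) * wb (w - y)"
  have D0: "D \<noteq> 0" using n unfolding D_def by simp
  have d0: "D * (K2 g l y * F2 g y w) = wa g (2 * w) * wa g (l + w) * wa g (y + w + g) * wa g (y - w) * wb (l - w) * wc g"
    unfolding D_def K1_def K2_def L1_def L2_def F1_def F2_def ee using n by (simp add: field_simps)
  have d1: "D * (F1 g w l * K2 g l y) = wa g (2 * w) * wa g (w + y) * wa g (w - l) * wb (l + w) * wb (w - y) * wc g"
    unfolding D_def K1_def K2_def L1_def L2_def F1_def F2_def ee using n by (simp add: field_simps)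
  have d2: "D * (K1 g l w * K2 g w y) = - wa g (l + w) * wa g (l + y) * wb (2 * w) * wb (w - y) * wc g * wc g"
    unfolding D_def K1_def K2_def L1_def L2_def F1_def F2_def ee using n by (simp add: field_simps)
  have d3: "D * (K2 g l w * L2 g w y) = wa g (2 * w + g) * wa g (l + y) * wa g (w + y) * wb (l - w) * wc g * wc g"
    unfolding D_def K1_def K2_def L1_def L2_def F1_def F2_def ee using n by (simp add: field_simps)
  have "D * (K2 g l y * F2 g y w) = D * (F1 g w l * K2 g l y + K1 g l w * K2 g w y + K2 g l w * L2 g w y)"
    unfolding distrib_left d0 d1 d2 d3 using arg_cong[OF p, of "\<lambda>t. (wc g) * t"] by (simp add: algebra_simps)
  then show ?thesis using D0 by simp
qed

lemma T3:
  assumes n: "wa g (2 * w) \<noteq> 0" "wa g (2 * y) \<noteq> 0" "wa g (l + w) \<noteq> 0" "wa g (w + y) \<noteq> 0"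
    "wa g (l + y) \<noteq> 0" "wb (l - w) \<noteq> 0" "wb (l - y) \<noteq> 0" "wb (w - y) \<noteq> 0"
  shows "L1 g l y * F1 g w y = F2 g l w * L1 g l y + L2 g l w * L1 g w y + L1 g l w * K1 g w y"
proof -
  have ee1: "wb (w - l) = - wb (l - w)" "wb (y - w) = - wb (w - y)" by (rule wb_swap)+
  have ee2: "wa g (w + l) = wa g (l + w)" "wb (w + l) = wb (l + w)"
    "wb (y + w + g) = wa g (w + y)" "wb (l + w + g) = wa g (l + w)"
    by (simp_all add: wa_def wb_def add_ac)
  note ee = ee1 ee2
  have p: "wa g (2 * w) * wa g (l + w) * wa g (w - y) * wb (l - w) * wb (w + y) = wa g (2 * w) * wa g (l + w + g) * wa g (l - w) * wa g (w + y) * wb (w - y) - wa g (2 * w + g) * wa g (l + w) * wa g (l + y) * wb (w - y) * wc g + wa g (l + y) * wa g (w + y) * wb (2 * w) * wb (l - w) * wc g"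
    unfolding wa_def wb_def wc_def mult_2 sinh_field_def
    by (simp only: exp_add exp_diff exp_minus) (simp add: field_simps, (simp add: algebra_simps)?)
  define D where "D = wa g (2 * w) * wa g (2 * y) * wa g (l + w) * wa g (l + y) * wa g (w + y) * wb (l - w) * wb (w - y)"
  have D0: "D \<noteq> 0" using n unfolding D_def by simp
  have d0: "D * (L1 g l y * F1 g w y) = wa g (2 * l + g) * wa g (2 * w) * wa g (l + w) * wa g (w - y) * wb (2 * y) * wb (l - w) * wb (w + y) * wc g"
    unfolding D_def K1_def K2_def L1_def L2_def F1_def F2_def ee using n by (simp add: field_simps)
  have d1: "D * (F2 g l w * L1 g l y) = wa g (2 * l + g) * wa g (2 * w) * wa g (l + w + g) * wa g (l - w) * wa g (w + y) * wb (2 * y) * wb (w - y) * wc g"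
    unfolding D_def K1_def K2_def L1_def L2_def F1_def F2_def ee using n by (simp add: field_simps)
  have d2: "D * (L2 g l w * L1 g w y) = - wa g (2 * l + g) * wa g (2 * w + g) * wa g (l + w) * wa g (l + y) * wb (2 * y) * wb (w - y) * wc g * wc g"
    unfolding D_def K1_def K2_def L1_def L2_def F1_def F2_def ee using n by (simp add: field_simps)
  have d3: "D * (L1 g l w * K1 g w y) = wa g (2 * l + g) * wa g (l + y) * wa g (w + y) * wb (2 * w) * wb (2 * y) * wb (l - w) * wc g * wc g"
    unfolding D_def K1_def K2_def L1_def L2_def F1_def F2_def ee using n by (simp add: field_simps)
  have "D * (L1 g l y * F1 g w y) = D * (F2 g l w * L1 g l y + L2 g l w * L1 g w y + L1 g l w * K1 g w y)"
    unfolding distrib_left d0 d1 d2 d3 using arg_cong[OF p, of "\<lambda>t. (wa g (2 * l + g) * wb (2 * y) * wc g) * t"] by (simp add: algebra_simps)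
  then show ?thesis using D0 by simp
qed

lemma T4:
  assumes n: "wa g (2 * w) \<noteq> 0" "wa g (2 * y) \<noteq> 0" "wa g (l + w) \<noteq> 0" "wa g (w + y) \<noteq> 0"
    "wa g (l + y) \<noteq> 0" "wb (l - w) \<noteq> 0" "wb (l - y) \<noteq> 0" "wb (w - y) \<noteq> 0"
  shows "L2 g l y * F2 g y w = F2 g l w * L2 g l y + L2 g l w * L2 g w y + L1 g l w * K2 g w y"
proof -
  have ee1: "wb (w - l) = - wb (l - w)" "wb (y - w) = - wb (w - y)" by (rule wb_swap)+
  have ee2: "wa g (w + l) = wa g (l + w)" "wb (w + l) = wb (l + w)"
    "wb (y + w + g) = wa g (w + y)" "wb (l + w + g) = wa g (l + w)"
    by (simp_all add: wa_def wb_def add_ac)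
  note ee = ee1 ee2
  have p: "wa g (2 * w) * wa g (l + w) * wa g (y + w + g) * wa g (y - w) * wb (l - w) = - wa g (2 * w) * wa g (l + w + g) * wa g (l - w) * wa g (w + y) * wb (w - y) + wa g (2 * w + g) * wa g (l + w) * wa g (w + y) * wb (l - y) * wc g - wb (2 * w) * wb (l - w) * wb (l - y) * wb (w - y) * wc g"
    unfolding wa_def wb_def wc_def mult_2 sinh_field_def
    by (simp only: exp_add exp_diff exp_minus) (simp add: field_simps, (simp add: algebra_simps)?)
  define D where "D = wa g (2 * w) * wa g (2 * y) * wa g (l + w) * wa g (w + y) * wb (l - w) * wb (l - y) * wb (w - y)"
  have D0: "D \<noteq> 0" using n unfolding D_def by simp
  have d0: "D * (L2 g l y * F2 g y w) = wa g (2 * l + g) * wa g (2 * w) * wa g (l + w) * wa g (y + w + g) * wa g (y - w) * wb (l - w) * wc g"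
    unfolding D_def K1_def K2_def L1_def L2_def F1_def F2_def ee using n by (simp add: field_simps)
  have d1: "D * (F2 g l w * L2 g l y) = - wa g (2 * l + g) * wa g (2 * w) * wa g (l + w + g) * wa g (l - w) * wa g (w + y) * wb (w - y) * wc g"
    unfolding D_def K1_def K2_def L1_def L2_def F1_def F2_def ee using n by (simp add: field_simps)
  have d2: "D * (L2 g l w * L2 g w y) = wa g (2 * l + g) * wa g (2 * w + g) * wa g (l + w) * wa g (w + y) * wb (l - y) * wc g * wc g"
    unfolding D_def K1_def K2_def L1_def L2_def F1_def F2_def ee using n by (simp add: field_simps)
  have d3: "D * (L1 g l w * K2 g w y) = - wa g (2 * l + g) * wb (2 * w) * wb (l - w) * wb (l - y) * wb (w - y) * wc g * wc g"
    unfolding D_def K1_def K2_def L1_def L2_def F1_def F2_def ee using n by (simp add: field_simps)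
  have "D * (L2 g l y * F2 g y w) = D * (F2 g l w * L2 g l y + L2 g l w * L2 g w y + L1 g l w * K2 g w y)"
    unfolding distrib_left d0 d1 d2 d3 using arg_cong[OF p, of "\<lambda>t. (wa g (2 * l + g) * wc g) * t"] by (simp add: algebra_simps)
  then show ?thesis using D0 by simp
qed


lemma lin_comb:
  fixes n :: nat
  assumes l: "lin F"
  shows "F (\<lambda>s. c * u s + (\<Sum>k<n. q k * V k s)) = (\<lambda>s. c * F u s + (\<Sum>k<n. q k * F (V k) s))"
proof -
  have "F (\<lambda>s. c * u s + (\<Sum>k<n. q k * V k s)) = (\<lambda>s. F (\<lambda>s. c * u s) s + F (\<lambda>s. \<Sum>k<n. q k * V k s) s)"
    by (rule lin_add[OF l])
  also have "\<dots> = (\<lambda>s. c * F u s + (\<Sum>k<n. F (\<lambda>s. q k * V k s) s))"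
  proof -
    have "F (\<lambda>s. \<Sum>k<n. q k * V k s) = (\<lambda>s. \<Sum>k<n. F (\<lambda>s. q k * V k s) s)"
      by (rule lin_sum[OF l finite_lessThan])
    then show ?thesis by (simp only: lin_scale[OF l])
  qed
  also have "\<dots> = (\<lambda>s. c * F u s + (\<Sum>k<n. q k * F (V k) s))"
    by (simp only: lin_scale[OF l])
  finally show ?thesis .
qed

definition dl :: "'a list \<Rightarrow> nat \<Rightarrow> 'a list" where
  "dl Y k = take k Y @ drop (Suc k) Y"

lemma dl_0[simp]: "dl (w # Z) 0 = Z" by (simp add: dl_def)
lemma dl_Suc[simp]: "dl (w # Z) (Suc k) = w # dl Z k" by (simp add: dl_def)

locale aba =
  fixes g :: complex and A B Dh :: "complex \<Rightarrow> qstate \<Rightarrow> qstate" and al de :: "complex \<Rightarrow> complex" and v0 :: qstate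
  assumes linA: "lin (A x)" and linB: "lin (B x)" and linD: "lin (Dh x)"
    and XB: "B x (B y \<phi>) = B y (B x \<phi>)"
    and XA: "wb (x - y) * wa g (x + y) * wa g (2 * y) * A x (B y \<phi>) s =
      - wa g (y - x) * wb (x + y) * wa g (2 * y) * B y (A x \<phi>) s
      + wc g * wb (2 * y) * wa g (x + y) * B x (A y \<phi>) s
      - wc g * wb (x - y) * B x (Dh y \<phi>) s"
    and XD: "wb (x - y) * wa g (x + y) * wa g (2 * y) * Dh x (B y \<phi>) s =
      wa g (x - y) * wa g (x + y + g) * wa g (2 * y) * B y (Dh x \<phi>) s
      - wc g * wa g (2 * x + g) * wa g (x + y) * B x (Dh y \<phi>) s
      + wc g * wa g (2 * x + g) * wb (2 * y) * wb (x - y) * B x (A y \<phi>) s"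
    and vA: "A x v0 = (\<lambda>s. al x * v0 s)" and vD: "Dh x v0 = (\<lambda>s. de x * v0 s)"
begin

definition cnd :: "complex \<Rightarrow> complex \<Rightarrow> bool" where
  "cnd x y \<longleftrightarrow> wb (x - y) \<noteq> 0 \<and> wa g (x + y) \<noteq> 0 \<and> wa g (2 * y) \<noteq> 0"

fun pw :: "complex list \<Rightarrow> bool" where
  "pw [] = True"
| "pw (w # Z) = ((\<forall>z\<in>set Z. cnd w z) \<and> pw Z)"

definition Bs :: "complex list \<Rightarrow> qstate" where "Bs Y = foldr B Y v0"
definition P1 :: "complex list \<Rightarrow> complex \<Rightarrow> complex" where "P1 Z y = prod_list (map (\<lambda>z. F1 g z y) Z)"
definition P2 :: "complex \<Rightarrow> complex list \<Rightarrow> complex" where "P2 y Z = prod_list (map (\<lambda>z. F2 g y z) Z)"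
definition GA :: "complex \<Rightarrow> complex \<Rightarrow> complex list \<Rightarrow> complex" where
  "GA x y Z = K1 g x y * al y * P1 Z y + K2 g x y * de y * P2 y Z"
definition GD :: "complex \<Rightarrow> complex \<Rightarrow> complex list \<Rightarrow> complex" where
  "GD x y Z = L1 g x y * al y * P1 Z y + L2 g x y * de y * P2 y Z"

lemma Bs_Cons[simp]: "Bs (w # Z) = B w (Bs Z)" by (simp add: Bs_def)
lemma P1_Cons[simp]: "P1 (w # Z) y = F1 g w y * P1 Z y" by (simp add: P1_def)
lemma P2_Cons[simp]: "P2 y (w # Z) = F2 g y w * P2 y Z" by (simp add: P2_def)

lemma XA':
  assumes "cnd x y"
  shows "A x (B y \<phi>) s = F1 g y x * B y (A x \<phi>) s + K1 g x y * B x (A y \<phi>) s + K2 g x y * B x (Dh y \<phi>) s"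
proof -
  have n: "wb (x - y) \<noteq> 0" "wa g (x + y) \<noteq> 0" "wa g (2 * y) \<noteq> 0" using assms unfolding cnd_def by auto
  have e: "wb (y - x) = - wb (x - y)" "wb (y + x) = wb (x + y)" "wa g (y + x) = wa g (x + y)"
    by (rule wb_swap) (simp_all add: add.commute)
  have "wb (x - y) * wa g (x + y) * wa g (2 * y) * A x (B y \<phi>) s
     = wb (x - y) * wa g (x + y) * wa g (2 * y) * (F1 g y x * B y (A x \<phi>) s + K1 g x y * B x (A y \<phi>) s + K2 g x y * B x (Dh y \<phi>) s)"
    unfolding XA F1_def K1_def K2_def e using n by (simp add: field_simps)
  then show ?thesis using n by simp
qed

lemma XD':
  assumes "cnd x y"
  shows "Dh x (B y \<phi>) s = F2 g x y * B y (Dh x \<phi>) s + L2 g x y * B x (Dh y \<phi>) s + L1 g x y * B x (A y \<phi>) s"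
proof -
  have n: "wb (x - y) \<noteq> 0" "wa g (x + y) \<noteq> 0" "wa g (2 * y) \<noteq> 0" using assms unfolding cnd_def by auto
  have e: "wb (x + y + g) = wa g (x + y)" by (simp add: wa_def wb_def)
  have "wb (x - y) * wa g (x + y) * wa g (2 * y) * Dh x (B y \<phi>) s
     = wb (x - y) * wa g (x + y) * wa g (2 * y) * (F2 g x y * B y (Dh x \<phi>) s + L2 g x y * B x (Dh y \<phi>) s + L1 g x y * B x (A y \<phi>) s)"
    unfolding XD F2_def L1_def L2_def e using n by (simp add: field_simps)
  then show ?thesis using n by simp
qed

lemma nz3:
  assumes "cnd l w" "cnd l y" "cnd w y"
  shows "wa g (2 * w) \<noteq> 0" "wa g (2 * y) \<noteq> 0" "wa g (l + w) \<noteq> 0" "wa g (w + y) \<noteq> 0"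
    "wa g (l + y) \<noteq> 0" "wb (l - w) \<noteq> 0" "wb (l - y) \<noteq> 0" "wb (w - y) \<noteq> 0"
  using assms unfolding cnd_def by auto

lemma GA_rec:
  assumes "cnd x w" "cnd x z" "cnd w z"
  shows "GA x z (w # Z) = F1 g w x * GA x z Z + K1 g x w * GA w z Z + K2 g x w * GD w z Z"
proof -
  note t1 = T1[OF nz3[OF assms]]
  note t2 = T2[OF nz3[OF assms]]
  show ?thesis unfolding GA_def GD_def P1_Cons P2_Cons
  proof -
    have "K1 g x z * al z * (F1 g w z * P1 Z z) + K2 g x z * de z * (F2 g z w * P2 z Z)
      = (K1 g x z * F1 g w z) * al z * P1 Z z + (K2 g x z * F2 g z w) * de z * P2 z Z" by (simp add: algebra_simps)
    also have "\<dots> = (F1 g w x * K1 g x z + K1 g x w * K1 g w z + K2 g x w * L1 g w z) * al z * P1 Z z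
       + (F1 g w x * K2 g x z + K1 g x w * K2 g w z + K2 g x w * L2 g w z) * de z * P2 z Z"
      by (simp only: t1 t2)
    also have "\<dots> = F1 g w x * (K1 g x z * al z * P1 Z z + K2 g x z * de z * P2 z Z) +
      K1 g x w * (K1 g w z * al z * P1 Z z + K2 g w z * de z * P2 z Z) +
      K2 g x w * (L1 g w z * al z * P1 Z z + L2 g w z * de z * P2 z Z)" by (simp add: algebra_simps)
    finally show "K1 g x z * al z * (F1 g w z * P1 Z z) + K2 g x z * de z * (F2 g z w * P2 z Z) =
      F1 g w x * (K1 g x z * al z * P1 Z z + K2 g x z * de z * P2 z Z) +
      K1 g x w * (K1 g w z * al z * P1 Z z + K2 g w z * de z * P2 z Z) +
      K2 g x w * (L1 g w z * al z * P1 Z z + L2 g w z * de z * P2 z Z)" .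
  qed
qed

lemma GD_rec:
  assumes "cnd x w" "cnd x z" "cnd w z"
  shows "GD x z (w # Z) = F2 g x w * GD x z Z + L2 g x w * GD w z Z + L1 g x w * GA w z Z"
proof -
  note t3 = T3[OF nz3[OF assms]]
  note t4 = T4[OF nz3[OF assms]]
  show ?thesis unfolding GA_def GD_def P1_Cons P2_Cons
  proof -
    have "L1 g x z * al z * (F1 g w z * P1 Z z) + L2 g x z * de z * (F2 g z w * P2 z Z)
      = (L1 g x z * F1 g w z) * al z * P1 Z z + (L2 g x z * F2 g z w) * de z * P2 z Z" by (simp add: algebra_simps)
    also have "\<dots> = (F2 g x w * L1 g x z + L2 g x w * L1 g w z + L1 g x w * K1 g w z) * al z * P1 Z z
       + (F2 g x w * L2 g x z + L2 g x w * L2 g w z + L1 g x w * K2 g w z) * de z * P2 z Z"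
      by (simp only: t3 t4)
    also have "\<dots> = F2 g x w * (L1 g x z * al z * P1 Z z + L2 g x z * de z * P2 z Z) +
      L2 g x w * (L1 g w z * al z * P1 Z z + L2 g w z * de z * P2 z Z) +
      L1 g x w * (K1 g w z * al z * P1 Z z + K2 g w z * de z * P2 z Z)" by (simp add: algebra_simps)
    finally show "L1 g x z * al z * (F1 g w z * P1 Z z) + L2 g x z * de z * (F2 g z w * P2 z Z) =
      F2 g x w * (L1 g x z * al z * P1 Z z + L2 g x z * de z * P2 z Z) +
      L2 g x w * (L1 g w z * al z * P1 Z z + L2 g w z * de z * P2 z Z) +
      L1 g x w * (K1 g w z * al z * P1 Z z + K2 g w z * de z * P2 z Z)" .
  qed
qed


lemma sum3: "(a::complex) * (\<Sum>k<n. p k * X k) + b * (\<Sum>k<n. q k * X k) + c * (\<Sum>k<n. r k * X k)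
   = (\<Sum>k<n. (a * p k + b * q k + c * r k) * X k)"
  by (simp add: sum_distrib_left sum.distrib algebra_simps)

lemma action:
  "pw Y \<Longrightarrow> (\<forall>x. (\<forall>y\<in>set Y. cnd x y) \<longrightarrow>
     A x (Bs Y) = (\<lambda>s. al x * P1 Y x * Bs Y s + (\<Sum>k<length Y. GA x (Y ! k) (dl Y k) * B x (Bs (dl Y k)) s)) \<and>
     Dh x (Bs Y) = (\<lambda>s. de x * P2 x Y * Bs Y s + (\<Sum>k<length Y. GD x (Y ! k) (dl Y k) * B x (Bs (dl Y k)) s)))"
proof (induction Y)
  case Nil
  show ?case by (simp add: Bs_def P1_def P2_def vA vD)
next
  case (Cons w Z)
  have pwZ: "pw Z" and cwZ: "\<forall>z\<in>set Z. cnd w z" using Cons.prems by auto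
  note IH = Cons.IH[OF pwZ]
  show ?case
  proof (intro allI impI)
    fix x assume cx: "\<forall>y\<in>set (w # Z). cnd x y"
    have cxw: "cnd x w" and cxZ: "\<forall>z\<in>set Z. cnd x z" using cx by auto
    define u where "u = Bs Z"
    define n where "n = length Z"
    define W where "W k = B x (B w (Bs (dl Z k)))" for k
    have IHx: "A x u = (\<lambda>s. al x * P1 Z x * u s + (\<Sum>k<n. GA x (Z ! k) (dl Z k) * B x (Bs (dl Z k)) s))"
         "Dh x u = (\<lambda>s. de x * P2 x Z * u s + (\<Sum>k<n. GD x (Z ! k) (dl Z k) * B x (Bs (dl Z k)) s))"
      using IH cxZ unfolding u_def n_def by blast+
    have IHw: "A w u = (\<lambda>s. al w * P1 Z w * u s + (\<Sum>k<n. GA w (Z ! k) (dl Z k) * B w (Bs (dl Z k)) s))"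
         "Dh w u = (\<lambda>s. de w * P2 w Z * u s + (\<Sum>k<n. GD w (Z ! k) (dl Z k) * B w (Bs (dl Z k)) s))"
      using IH cwZ unfolding u_def n_def by blast+
    have bw_ax: "B w (A x u) s = al x * P1 Z x * B w u s + (\<Sum>k<n. GA x (Z ! k) (dl Z k) * W k s)" for s
      unfolding IHx lin_comb[OF linB] W_def XB[of w x] ..
    have bw_dx: "B w (Dh x u) s = de x * P2 x Z * B w u s + (\<Sum>k<n. GD x (Z ! k) (dl Z k) * W k s)" for s
      unfolding IHx lin_comb[OF linB] W_def XB[of w x] ..
    have bx_aw: "B x (A w u) s = al w * P1 Z w * B x u s + (\<Sum>k<n. GA w (Z ! k) (dl Z k) * W k s)" for s
      unfolding IHw lin_comb[OF linB] W_def ..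
    have bx_dw: "B x (Dh w u) s = de w * P2 w Z * B x u s + (\<Sum>k<n. GD w (Z ! k) (dl Z k) * W k s)" for s
      unfolding IHw lin_comb[OF linB] W_def ..
    have czk: "cnd x (Z ! k)" "cnd w (Z ! k)" if "k < n" for k
      using that cxZ cwZ unfolding n_def by auto
    have recA: "GA x (Z ! k) (w # dl Z k) = F1 g w x * GA x (Z ! k) (dl Z k) + K1 g x w * GA w (Z ! k) (dl Z k) + K2 g x w * GD w (Z ! k) (dl Z k)"
      if "k < n" for k
      by (rule GA_rec[OF cxw czk[OF that]])
    have recD: "GD x (Z ! k) (w # dl Z k) = F2 g x w * GD x (Z ! k) (dl Z k) + L2 g x w * GD w (Z ! k) (dl Z k) + L1 g x w * GA w (Z ! k) (dl Z k)"
      if "k < n" for k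
      by (rule GD_rec[OF cxw czk[OF that]])
    have sA: "(\<Sum>k<length (w # Z). GA x ((w # Z) ! k) (dl (w # Z) k) * B x (Bs (dl (w # Z) k)) s)
       = GA x w Z * B x u s + (\<Sum>k<n. GA x (Z ! k) (w # dl Z k) * W k s)" for s
      unfolding n_def u_def W_def length_Cons sum.lessThan_Suc_shift by simp
    have sD: "(\<Sum>k<length (w # Z). GD x ((w # Z) ! k) (dl (w # Z) k) * B x (Bs (dl (w # Z) k)) s)
       = GD x w Z * B x u s + (\<Sum>k<n. GD x (Z ! k) (w # dl Z k) * W k s)" for s
      unfolding n_def u_def W_def length_Cons sum.lessThan_Suc_shift by simp
    have A: "A x (Bs (w # Z)) s = al x * P1 (w # Z) x * Bs (w # Z) s
        + (\<Sum>k<length (w # Z). GA x ((w # Z) ! k) (dl (w # Z) k) * B x (Bs (dl (w # Z) k)) s)" for s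
    proof -
      have "A x (Bs (w # Z)) s = F1 g w x * B w (A x u) s + K1 g x w * B x (A w u) s + K2 g x w * B x (Dh w u) s"
        unfolding u_def Bs_Cons by (rule XA'[OF cxw])
      also have "\<dots> = al x * (F1 g w x * P1 Z x) * B w u s + (K1 g x w * al w * P1 Z w + K2 g x w * de w * P2 w Z) * B x u s
         + (F1 g w x * (\<Sum>k<n. GA x (Z ! k) (dl Z k) * W k s) + K1 g x w * (\<Sum>k<n. GA w (Z ! k) (dl Z k) * W k s)
            + K2 g x w * (\<Sum>k<n. GD w (Z ! k) (dl Z k) * W k s))"
        unfolding bw_ax bx_aw bx_dw by (simp add: algebra_simps)
      also have "\<dots> = al x * (F1 g w x * P1 Z x) * B w u s + GA x w Z * B x u s
         + (\<Sum>k<n. GA x (Z ! k) (w # dl Z k) * W k s)"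
        unfolding sum3 GA_def[of x w Z, symmetric]
        by (simp add: recA)
      finally show ?thesis unfolding sA by (simp add: u_def)
    qed
    have D: "Dh x (Bs (w # Z)) s = de x * P2 x (w # Z) * Bs (w # Z) s
        + (\<Sum>k<length (w # Z). GD x ((w # Z) ! k) (dl (w # Z) k) * B x (Bs (dl (w # Z) k)) s)" for s
    proof -
      have "Dh x (Bs (w # Z)) s = F2 g x w * B w (Dh x u) s + L2 g x w * B x (Dh w u) s + L1 g x w * B x (A w u) s"
        unfolding u_def Bs_Cons by (rule XD'[OF cxw])
      also have "\<dots> = de x * (F2 g x w * P2 x Z) * B w u s + (L1 g x w * al w * P1 Z w + L2 g x w * de w * P2 w Z) * B x u s
         + (F2 g x w * (\<Sum>k<n. GD x (Z ! k) (dl Z k) * W k s) + L2 g x w * (\<Sum>k<n. GD w (Z ! k) (dl Z k) * W k s)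
            + L1 g x w * (\<Sum>k<n. GA w (Z ! k) (dl Z k) * W k s))"
        unfolding bw_dx bx_aw bx_dw by (simp add: algebra_simps)
      also have "\<dots> = de x * (F2 g x w * P2 x Z) * B w u s + GD x w Z * B x u s
         + (\<Sum>k<n. GD x (Z ! k) (w # dl Z k) * W k s)"
        unfolding sum3 GD_def[of x w Z, symmetric]
        by (simp add: recD)
      finally show ?thesis unfolding sD by (simp add: u_def)
    qed
    show "A x (Bs (w # Z)) = (\<lambda>s. al x * P1 (w # Z) x * Bs (w # Z) s
        + (\<Sum>k<length (w # Z). GA x ((w # Z) ! k) (dl (w # Z) k) * B x (Bs (dl (w # Z) k)) s)) \<and>
      Dh x (Bs (w # Z)) = (\<lambda>s. de x * P2 x (w # Z) * Bs (w # Z) s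
        + (\<Sum>k<length (w # Z). GD x ((w # Z) ! k) (dl (w # Z) k) * B x (Bs (dl (w # Z) k)) s))"
      using A D by (simp add: fun_eq_iff)
  qed
qed

end

definition eqL :: "nat \<Rightarrow> fstate \<Rightarrow> fstate \<Rightarrow> bool" where
  "eqL L f g \<longleftrightarrow> (\<forall>a s. length s = L \<longrightarrow> f (a, s) = g (a, s))"

lemma Rop_Rr: "eqL L f g \<Longrightarrow> 1 \<le> j \<Longrightarrow> j \<le> L \<Longrightarrow> eqL L (Rop \<gamma> x j f) (Rr \<gamma> x j g)"
  unfolding eqL_def Rop_def Rr_def by (auto intro!: sum.cong)

lemma Kop_eqL: "eqL L f g \<Longrightarrow> eqL L (Kop h x f) (Kop h x g)"
  unfolding eqL_def Kop_def by auto

definition MonL :: "complex \<Rightarrow> complex \<Rightarrow> (nat \<Rightarrow> complex) \<Rightarrow> complex \<Rightarrow> nat list \<Rightarrow> fstate \<Rightarrow> fstate" where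
  "MonL \<gamma> h \<mu> x js = fold (\<lambda>j f. Rop \<gamma> (x - \<mu> j) j \<circ> f) js id \<circ> Kop h x \<circ> fold (\<lambda>j f. f \<circ> Rop \<gamma> (x + \<mu> j) j) js id"

lemma MonL_Nil: "MonL \<gamma> h \<mu> x [] = Kop h x" by (simp add: MonL_def)
lemma MonL_snoc: "MonL \<gamma> h \<mu> x (js @ [j]) = Rop \<gamma> (x - \<mu> j) j \<circ> MonL \<gamma> h \<mu> x js \<circ> Rop \<gamma> (x + \<mu> j) j"
  by (simp add: MonL_def comp_assoc)

lemma MonL_Mr: "set js \<subseteq> {1..L} \<Longrightarrow> eqL L f g \<Longrightarrow> eqL L (MonL \<gamma> h \<mu> x js f) (Mr \<gamma> h \<mu> x (rev js) g)"
proof (induction js arbitrary: f g rule: rev_induct)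
  case Nil
  then show ?case by (simp add: MonL_Nil Kop_eqL)
next
  case (snoc j js)
  have j: "1 \<le> j" "j \<le> L" and sub: "set js \<subseteq> {1..L}" using snoc.prems by auto
  have "eqL L (Rop \<gamma> (x + \<mu> j) j f) (Rr \<gamma> (x + \<mu> j) j g)" by (rule Rop_Rr[OF snoc.prems(2) j])
  then have "eqL L (MonL \<gamma> h \<mu> x js (Rop \<gamma> (x + \<mu> j) j f)) (Mr \<gamma> h \<mu> x (rev js) (Rr \<gamma> (x + \<mu> j) j g))"
    by (rule snoc.IH[OF sub])
  then have "eqL L (Rop \<gamma> (x - \<mu> j) j (MonL \<gamma> h \<mu> x js (Rop \<gamma> (x + \<mu> j) j f)))
     (Rr \<gamma> (x - \<mu> j) j (Mr \<gamma> h \<mu> x (rev js) (Rr \<gamma> (x + \<mu> j) j g)))"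
    by (rule Rop_Rr[OF _ j])
  then show ?case by (simp add: MonL_snoc)
qed

definition jsL :: "nat \<Rightarrow> nat list" where "jsL L = rev [1..<L+1]"

lemma jsL_props: "distinct (jsL L)" "\<forall>k\<in>set (jsL L). k \<ge> 1" "set (jsL L) = {1..L}"
  by (auto simp: jsL_def)

lemma Mono_Mr: "length s = L \<Longrightarrow> Mono \<gamma> h L \<mu> x f (a, s) = Mr \<gamma> h \<mu> x (jsL L) f (a, s)"
proof -
  assume l: "length s = L"
  have "Mono \<gamma> h L \<mu> x = MonL \<gamma> h \<mu> x [1..<L+1]" by (simp add: Mono_def MonL_def)
  moreover have "eqL L (MonL \<gamma> h \<mu> x [1..<L+1] f) (Mr \<gamma> h \<mu> x (rev [1..<L+1]) f)"
    by (rule MonL_Mr) (auto simp: eqL_def)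
  ultimately show ?thesis using l unfolding eqL_def jsL_def by simp
qed

definition qeq :: "nat \<Rightarrow> qstate \<Rightarrow> qstate \<Rightarrow> bool" where
  "qeq L \<phi> \<psi> \<longleftrightarrow> (\<forall>s. length s = L \<longrightarrow> \<phi> s = \<psi> s)"

lemma Mr_eqL: "eqL L f g \<Longrightarrow> eqL L (Mr \<gamma> h \<mu> x js f) (Mr \<gamma> h \<mu> x js g)"
proof (induction js arbitrary: f g)
  case Nil
  then show ?case by (simp add: Kop_eqL)
next
  case (Cons j js)
  have r: "eqL L (Rr \<gamma> y j f') (Rr \<gamma> y j g')" if "eqL L f' g'" for y f' g'
    using that unfolding eqL_def Rr_def by (auto intro!: sum.cong)
  show ?case using Cons by (simp add: r)
qed

lemma Ment_Er: "qeq L \<phi> \<psi> \<Longrightarrow> qeq L (Ment \<gamma> h L \<mu> i j x \<phi>) (Er \<gamma> h \<mu> (jsL L) i j x \<psi>)"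
proof -
  assume q: "qeq L \<phi> \<psi>"
  have e: "eqL L (\<lambda>(a, s'). if a = j then \<phi> s' else 0) (\<lambda>(a, s'). if a = j then \<psi> s' else 0)"
    using q unfolding qeq_def eqL_def by auto
  show ?thesis
    using Mr_eqL[OF e, of \<gamma> h \<mu> x "jsL L"] unfolding qeq_def Ment_def Er_def eqL_def
    by (simp add: Mono_Mr)
qed

lemma Sn_Sr: "Sn \<gamma> h L \<mu> xs ys = fold (Er \<gamma> h \<mu> (jsL L) True False) xs (foldr (Er \<gamma> h \<mu> (jsL L) False True) ys (vac L)) (replicate L False)"
proof -
  have b: "qeq L (foldr (Bop \<gamma> h L \<mu>) ys (vac L)) (foldr (Er \<gamma> h \<mu> (jsL L) False True) ys (vac L))"
    by (induction ys) (auto simp: qeq_def Bop_def intro: Ment_Er[unfolded qeq_def, rule_format])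
  have c: "qeq L \<Phi> \<Psi> \<Longrightarrow> qeq L (fold (Cop \<gamma> h L \<mu>) xs \<Phi>) (fold (Er \<gamma> h \<mu> (jsL L) True False) xs \<Psi>)" for \<Phi> \<Psi>
  proof (induction xs arbitrary: \<Phi> \<Psi>)
    case Nil
    then show ?case by simp
  next
    case (Cons x xs)
    have "qeq L (Cop \<gamma> h L \<mu> x \<Phi>) (Er \<gamma> h \<mu> (jsL L) True False x \<Psi>)"
      unfolding Cop_def by (rule Ment_Er[OF Cons.prems])
    then show ?case using Cons.IH by simp
  qed
  show ?thesis using c[OF b] unfolding Sn_def qeq_def by simp
qed


definition SL :: "nat \<Rightarrow> bool list set" where "SL L = {s. length s = L}"

lemma finite_SL: "finite (SL L)"
proof -
  have "finite {xs. set xs \<subseteq> (UNIV :: bool set) \<and> length xs = L}"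
    by (rule finite_lists_length_eq) simp
  then show ?thesis unfolding SL_def by simp
qed

lemma invol_sum:
  fixes H :: "bool list \<Rightarrow> bool \<Rightarrow> 'a::comm_monoid_add"
  assumes "i < L"
  shows "(\<Sum>s\<in>SL L. \<Sum>t\<in>UNIV. H s t) = (\<Sum>s\<in>SL L. \<Sum>t\<in>UNIV. H (s[i := t]) (s ! i))"
proof -
  have "(\<Sum>s\<in>SL L. \<Sum>t\<in>UNIV. H s t) = (\<Sum>(s, t)\<in>SL L \<times> (UNIV :: bool set). H s t)"
    by (rule sum.cartesian_product)
  also have "\<dots> = (\<Sum>(s, t)\<in>SL L \<times> (UNIV :: bool set). H (s[i := t]) (s ! i))"
    by (rule sum.reindex_bij_witness[where i = "\<lambda>(s, t). (s[i := t], s ! i)" and j = "\<lambda>(s, t). (s[i := t], s ! i)"])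
       (use assms in \<open>auto simp: SL_def\<close>)
  also have "\<dots> = (\<Sum>s\<in>SL L. \<Sum>t\<in>UNIV. H (s[i := t]) (s ! i))"
    by (rule sum.cartesian_product[symmetric])
  finally show ?thesis .
qed

definition pairF :: "nat \<Rightarrow> fstate \<Rightarrow> fstate \<Rightarrow> complex" where
  "pairF L f g = (\<Sum>a\<in>UNIV. \<Sum>s\<in>SL L. f (a, s) * g (a, s))"

lemma Rent_sym: "Rent \<gamma> x p q = Rent \<gamma> x q p"
  unfolding Rent_def by (auto split: prod.splits)

lemma Rr_in: "j - 1 < length s \<Longrightarrow> Rr \<gamma> x j f (a, s) = (\<Sum>a'\<in>UNIV. \<Sum>t\<in>UNIV. Rent \<gamma> x (a, s ! (j - 1)) (a', t) * f (a', s[j - 1 := t]))"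
  by (simp add: Rr_def)

lemma Rr_transp:
  assumes "1 \<le> j" "j \<le> L"
  shows "pairF L (Rr \<gamma> x j f) g = pairF L f (Rr \<gamma> x j g)"
proof -
  have i: "j - 1 < L" using assms by simp
  define Q where "Q s t = (\<Sum>a\<in>UNIV. \<Sum>a'\<in>UNIV. Rent \<gamma> x (a, s ! (j - 1)) (a', t) * f (a', s[j - 1 := t]) * g (a, s))" for s t
  have L1: "pairF L (Rr \<gamma> x j f) g = (\<Sum>s\<in>SL L. \<Sum>t\<in>UNIV. Q s t)"
    unfolding pairF_def
    apply (subst sum.swap)
    apply (rule sum.cong[OF refl])
    subgoal for s
      using i by (simp add: SL_def Rr_in Q_def UNIV_bool_sum algebra_simps)
    done
  have L2: "(\<Sum>s\<in>SL L. \<Sum>t\<in>UNIV. Q s t) = (\<Sum>s\<in>SL L. \<Sum>t\<in>UNIV. Q (s[j - 1 := t]) (s ! (j - 1)))"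
    by (rule invol_sum[OF i])
  have L3: "pairF L f (Rr \<gamma> x j g) = (\<Sum>s\<in>SL L. \<Sum>t\<in>UNIV. Q (s[j - 1 := t]) (s ! (j - 1)))"
    unfolding pairF_def
    apply (subst sum.swap)
    apply (rule sum.cong[OF refl])
    subgoal for s
      using i by (cases "s ! (j - 1)") (simp_all add: SL_def Rr_in Q_def UNIV_bool_sum Rent_def algebra_simps upd_same)
    done
  show ?thesis using L1 L2 L3 by simp
qed


lemma Kop_transp: "pairF L (Kop h x f) g = pairF L f (Kop h x g)"
  unfolding pairF_def Kop_def by (simp add: algebra_simps)

lemma Mr_transp:
  assumes "set js \<subseteq> {1..L}"
  shows "pairF L (Mr \<gamma> h \<mu> x js f) g = pairF L f (Mr \<gamma> h (\<lambda>k. - \<mu> k) x js g)"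
  using assms
proof (induction js arbitrary: f g)
  case Nil
  then show ?case by (simp add: Kop_transp)
next
  case (Cons j js)
  have j: "1 \<le> j" "j \<le> L" and sub: "set js \<subseteq> {1..L}" using Cons.prems by auto
  have e1: "x - - \<mu> j = x + \<mu> j" "x + - \<mu> j = x - \<mu> j" by simp_all
  have "pairF L (Mr \<gamma> h \<mu> x (j # js) f) g
      = pairF L (Rr \<gamma> (x - \<mu> j) j (Mr \<gamma> h \<mu> x js (Rr \<gamma> (x + \<mu> j) j f))) g" by simp
  also have "\<dots> = pairF L (Mr \<gamma> h \<mu> x js (Rr \<gamma> (x + \<mu> j) j f)) (Rr \<gamma> (x - \<mu> j) j g)"
    by (rule Rr_transp[OF j])
  also have "\<dots> = pairF L (Rr \<gamma> (x + \<mu> j) j f) (Mr \<gamma> h (\<lambda>k. - \<mu> k) x js (Rr \<gamma> (x - \<mu> j) j g))"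
    by (rule Cons.IH[OF sub])
  also have "\<dots> = pairF L f (Rr \<gamma> (x + \<mu> j) j (Mr \<gamma> h (\<lambda>k. - \<mu> k) x js (Rr \<gamma> (x - \<mu> j) j g)))"
    by (rule Rr_transp[OF j])
  also have "\<dots> = pairF L f (Mr \<gamma> h (\<lambda>k. - \<mu> k) x (j # js) g)"
    by (simp only: Mr.simps comp_apply e1)
  finally show ?case .
qed

definition pairQ :: "nat \<Rightarrow> qstate \<Rightarrow> qstate \<Rightarrow> complex" where
  "pairQ L \<phi> \<psi> = (\<Sum>s\<in>SL L. \<phi> s * \<psi> s)"

lemma pairF_delta: "pairF L f (\<lambda>(a, s). if a = i then \<psi> s else 0) = (\<Sum>s\<in>SL L. f (i, s) * \<psi> s)"
  unfolding pairF_def by (cases i) (simp_all add: UNIV_bool_sum)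
lemma pairF_delta': "pairF L (\<lambda>(a, s). if a = i then \<psi> s else 0) f = (\<Sum>s\<in>SL L. \<psi> s * f (i, s))"
  unfolding pairF_def by (cases i) (simp_all add: UNIV_bool_sum)

lemma Er_transp:
  assumes "set js \<subseteq> {1..L}"
  shows "pairQ L (Er \<gamma> h \<mu> js i j x \<phi>) \<psi> = pairQ L \<phi> (Er \<gamma> h (\<lambda>k. - \<mu> k) js j i x \<psi>)"
proof -
  have "pairQ L (Er \<gamma> h \<mu> js i j x \<phi>) \<psi> = pairF L (Mr \<gamma> h \<mu> x js (\<lambda>(a, s'). if a = j then \<phi> s' else 0)) (\<lambda>(a, s). if a = i then \<psi> s else 0)"
    unfolding pairQ_def Er_def pairF_delta ..
  also have "\<dots> = pairF L (\<lambda>(a, s'). if a = j then \<phi> s' else 0) (Mr \<gamma> h (\<lambda>k. - \<mu> k) x js (\<lambda>(a, s). if a = i then \<psi> s else 0))"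
    by (rule Mr_transp[OF assms])
  also have "\<dots> = pairQ L \<phi> (Er \<gamma> h (\<lambda>k. - \<mu> k) js j i x \<psi>)"
    unfolding pairQ_def Er_def pairF_delta' ..
  finally show ?thesis .
qed

lemma pairQ_vac: "pairQ L (vac L) \<psi> = \<psi> (replicate L False)"
proof -
  have "pairQ L (vac L) \<psi> = (\<Sum>s\<in>SL L. if s = replicate L False then \<psi> s else 0)"
    unfolding pairQ_def vac_def by (intro sum.cong) auto
  also have "\<dots> = \<psi> (replicate L False)"
    using finite_SL by (simp add: SL_def)
  finally show ?thesis .
qed

lemma pairQ_fold:
  assumes "set js \<subseteq> {1..L}"
  shows "pairQ L \<phi> (fold (Er \<gamma> h \<mu> js True False) xs \<Phi>) = pairQ L (foldr (Er \<gamma> h (\<lambda>k. - \<mu> k) js False True) xs \<phi>) \<Phi>"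
proof (induction xs arbitrary: \<phi> \<Phi>)
  case Nil
  then show ?case by simp
next
  case (Cons x xs)
  have e: "(\<lambda>k. - (- \<mu> k)) = \<mu>" by simp
  have "pairQ L \<phi> (fold (Er \<gamma> h \<mu> js True False) (x # xs) \<Phi>) = pairQ L (foldr (Er \<gamma> h (\<lambda>k. - \<mu> k) js False True) xs \<phi>) (Er \<gamma> h \<mu> js True False x \<Phi>)"
    using Cons.IH by simp
  also have "\<dots> = pairQ L (Er \<gamma> h (\<lambda>k. - \<mu> k) js False True x (foldr (Er \<gamma> h (\<lambda>k. - \<mu> k) js False True) xs \<phi>)) \<Phi>"
    using Er_transp[OF assms, of \<gamma> h "\<lambda>k. - \<mu> k" False True x "foldr (Er \<gamma> h (\<lambda>k. - \<mu> k) js False True) xs \<phi>" \<Phi>]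
    unfolding e by simp
  finally show ?case by simp
qed

lemma pairQ_lin: "pairQ L \<phi> (\<lambda>s. c * u s + (\<Sum>k<n. q k * V k s)) = c * pairQ L \<phi> u + (\<Sum>k<n. q k * pairQ L \<phi> (V k))"
  unfolding pairQ_def by (simp add: sum_distrib_left sum.distrib algebra_simps sum.swap[of _ "SL L"])
lemma pairQ_lin': "pairQ L (\<lambda>s. c * u s + (\<Sum>k<n. q k * V k s)) \<psi> = c * pairQ L u \<psi> + (\<Sum>k<n. q k * pairQ L (V k) \<psi>)"
  unfolding pairQ_def by (simp add: sum_distrib_left sum.distrib algebra_simps sum.swap[of _ "SL L"])

lemma alr_neg: "alr \<gamma> h (\<lambda>k. - \<mu> k) x js = alr \<gamma> h \<mu> x js"
  by (induction js) (simp_all add: algebra_simps)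
lemma der_neg: "der \<gamma> h (\<lambda>k. - \<mu> k) x js = der \<gamma> h \<mu> x js"
  by (induction js) (simp_all add: alr_neg algebra_simps)


lemma chain_jsL: "chain (jsL L)"
  unfolding chain_def using jsL_props by blast

definition dhr :: "complex \<Rightarrow> complex \<Rightarrow> (nat \<Rightarrow> complex) \<Rightarrow> complex \<Rightarrow> nat list \<Rightarrow> complex" where
  "dhr \<gamma> h \<mu> x js = wa \<gamma> (2 * x) * der \<gamma> h \<mu> x js - wc \<gamma> * alr \<gamma> h \<mu> x js"

lemma vj_vac: "k \<in> {1..L} \<Longrightarrow> vj k (vac L)"
  unfolding vj_def vac_def by auto

context chain begin

lemma lin_Dh: "lin (Dh x)"
proof -
  have l1: "lin (E True True x)" and l2: "lin (E False False x)" by (rule lin_Er)+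
  show ?thesis
    unfolding lin_def Dh_def
    by (simp add: lin_add[OF l1] lin_add[OF l2] lin_scale[OF l1] lin_scale[OF l2] algebra_simps)
qed

lemma aba_inst:
  assumes sj: "set js = {1..L}"
  shows "aba \<gamma> (E False False) (E False True) Dh (\<lambda>x. alr \<gamma> h \<mu> x js) (\<lambda>x. dhr \<gamma> h \<mu> x js) (vac L)"
proof -
  have vjs: "\<forall>k\<in>set js. vj k (vac L)" using sj vj_vac by blast
  note vm = vac_main[OF dj pos vjs, where \<gamma> = \<gamma> and h = h and \<mu> = \<mu>]
  have f0: "(\<lambda>(a, s'). if a = False then vac L s' else 0) = (\<lambda>(a, s'). if a then 0 else vac L s')"
    by (auto simp: fun_eq_iff)
  have f1: "(\<lambda>(a, s'). if a = True then vac L s' else 0) = (\<lambda>(a, s'). if a then vac L s' else 0)"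
    by (auto simp: fun_eq_iff)
  have vA: "E False False x (vac L) = (\<lambda>s. alr \<gamma> h \<mu> x js * vac L s)" for x
    unfolding Er_def f0 using conjunct1[OF vm[where x = x]] by (simp add: fun_eq_iff)
  have vDD: "E True True x (vac L) s = der \<gamma> h \<mu> x js * vac L s" for x s
    unfolding Er_def f1 using conjunct2[OF vm[where x = x]] by simp
  show ?thesis
  proof (unfold_locales)
    show "lin (E False False x)" for x by (rule lin_Er)
    show "lin (E False True x)" for x by (rule lin_Er)
    show "lin (Dh x)" for x by (rule lin_Dh)
    show "E False True x (E False True y \<phi>) = E False True y (E False True x \<phi>)" for x y \<phi>
      using XB by (simp add: fun_eq_iff)
    show "wb (x - y) * a (x + y) * a (2 * y) * E False False x (E False True y \<phi>) s =
      - a (y - x) * wb (x + y) * a (2 * y) * E False True y (E False False x \<phi>) s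
      + c * wb (2 * y) * a (x + y) * E False True x (E False False y \<phi>) s
      - c * wb (x - y) * E False True x (Dh y \<phi>) s" for x y \<phi> s
      by (rule XA)
    show "wb (x - y) * a (x + y) * a (2 * y) * Dh x (E False True y \<phi>) s =
      a (x - y) * a (x + y + \<gamma>) * a (2 * y) * E False True y (Dh x \<phi>) s
      - c * a (2 * x + \<gamma>) * a (x + y) * E False True x (Dh y \<phi>) s
      + c * a (2 * x + \<gamma>) * wb (2 * y) * wb (x - y) * E False True x (E False False y \<phi>) s" for x y \<phi> s
      by (rule XD)
    show "E False False x (vac L) = (\<lambda>s. alr \<gamma> h \<mu> x js * vac L s)" for x by (rule vA)
    show "Dh x (vac L) = (\<lambda>s. dhr \<gamma> h \<mu> x js * vac L s)" for x
      unfolding Dh_def dhr_def vDD vA by (simp add: fun_eq_iff algebra_simps)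
  qed
qed

end

lemma alr_prod: "alr \<gamma> h \<mu> x js = sinh (h + x) * prod_list (map (\<lambda>j. wa \<gamma> (x - \<mu> j) * wa \<gamma> (x + \<mu> j)) js)"
  by (induction js) (simp_all add: algebra_simps)

lemma dhr_prod: "dhr \<gamma> h \<mu> x js = - wb (2 * x) * wa \<gamma> (x - h) * prod_list (map (\<lambda>j. wb (x - \<mu> j) * wb (x + \<mu> j)) js)"
proof (induction js)
  case Nil
  show ?case unfolding dhr_def der.simps alr.simps
    unfolding wa_def wb_def wc_def mult_2 sinh_field_def
    by (simp only: exp_add exp_diff exp_minus) (simp add: field_simps, (simp add: algebra_simps)?)
next
  case (Cons j js)
  have id1: "wa \<gamma> (x - \<mu> j) * wa \<gamma> (x + \<mu> j) - wb (x - \<mu> j) * wb (x + \<mu> j) = wc \<gamma> * wa \<gamma> (2 * x)"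
    by (rule Id1)
  have "dhr \<gamma> h \<mu> x (j # js) = wb (x - \<mu> j) * wb (x + \<mu> j) * dhr \<gamma> h \<mu> x js
      + wc \<gamma> * alr \<gamma> h \<mu> x js * (wc \<gamma> * wa \<gamma> (2 * x) - (wa \<gamma> (x - \<mu> j) * wa \<gamma> (x + \<mu> j) - wb (x - \<mu> j) * wb (x + \<mu> j)))"
    unfolding dhr_def by (simp add: algebra_simps)
  also have "\<dots> = wb (x - \<mu> j) * wb (x + \<mu> j) * dhr \<gamma> h \<mu> x js" unfolding id1 by simp
  finally show ?case unfolding Cons by (simp add: algebra_simps)
qed

lemma prod_list_jsL: "prod_list (map f (jsL L)) = (\<Prod>j = 1..L. f j)"
proof -
  have "prod_list (map f (jsL L)) = prod f (set (jsL L))"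
    by (rule prod.distinct_set_conv_list[symmetric]) (simp add: jsL_props)
  then show ?thesis using jsL_props(3) by simp
qed

lemma alr_LamA: "alr \<gamma> h \<mu> x (jsL L) = LamA \<gamma> h L \<mu> x"
  unfolding alr_prod prod_list_jsL LamA_def wb_def ..

lemma dhr_LamDt: "wa \<gamma> (2 * x) \<noteq> 0 \<Longrightarrow> dhr \<gamma> h \<mu> x (jsL L) = wa \<gamma> (2 * x) * LamDt \<gamma> h L \<mu> x"
  unfolding dhr_prod prod_list_jsL LamDt_def by (simp add: field_simps)

lemma prod_nth: "prod_list (map f xs) = (\<Prod>k<length xs. f (xs ! k))"
  by (simp add: prod.list_conv_set_nth atLeast0LessThan)

lemma prod_dl: "k < length ws \<Longrightarrow> prod_list (map f (dl ws k)) = (\<Prod>j\<in>{..<length ws} - {k}. f (ws ! j))"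
proof (induction ws arbitrary: k)
  case Nil
  then show ?case by simp
next
  case (Cons z ws)
  show ?case
  proof (cases k)
    case 0
    have e: "{..<Suc (length ws)} - {0} = Suc ` {..<length ws}"
      by (auto simp: lessThan_Suc_eq_insert_0)
    show ?thesis unfolding 0 by (simp add: e prod.reindex prod_nth)
  next
    case (Suc k')
    have k': "k' < length ws" using Cons.prems Suc by simp
    have e: "{..<Suc (length ws)} - {Suc k'} = insert 0 (Suc ` ({..<length ws} - {k'}))"
      by (auto simp: lessThan_Suc_eq_insert_0)
    show ?thesis unfolding Suc using Cons.IH[OF k'] by (simp add: e prod.reindex)
  qed
qed


context aba begin
lemma pw_nth: "(\<forall>i j. i < j \<longrightarrow> j < length Y \<longrightarrow> cnd (Y ! i) (Y ! j)) \<Longrightarrow> pw Y"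
proof (induction Y)
  case Nil
  then show ?case by simp
next
  case (Cons w Z)
  have a: "\<forall>z\<in>set Z. cnd w z"
  proof
    fix z assume "z \<in> set Z"
    then obtain m where m: "m < length Z" "z = Z ! m" by (auto simp: in_set_conv_nth)
    show "cnd w z" using Cons.prems[rule_format, of 0 "Suc m"] m by simp
  qed
  have b: "pw Z"
  proof (rule Cons.IH, intro allI impI)
    fix i j assume "i < j" "j < length Z"
    then show "cnd (Z ! i) (Z ! j)" using Cons.prems[rule_format, of "Suc i" "Suc j"] by simp
  qed
  show ?case using a b by simp
qed
end

lemma delvec_dl: "delvec l0 ws k = l0 # dl ws k" by (simp add: delvec_def dl_def)

lemma Sn_pair:
  "Sn \<gamma> h L \<mu> X Y = pairQ L (foldr (Er \<gamma> h (\<lambda>k. - \<mu> k) (jsL L) False True) X (vac L)) (foldr (Er \<gamma> h \<mu> (jsL L) False True) Y (vac L))"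
proof -
  have sub: "set (jsL L) \<subseteq> {1..L}" using jsL_props by simp
  show ?thesis
    unfolding Sn_Sr pairQ_vac[symmetric] pairQ_fold[OF sub] ..
qed


theorem theorem1:
  fixes \<gamma> h l0 :: complex and L n :: nat and \<mu> :: "nat \<Rightarrow> complex"
    and xs ys :: "complex list"
  assumes "L \<ge> 1" and "n \<ge> 1"
    and "length xs = n" and "length ys = n"
    and "\<forall>z \<in> set xs \<union> set ys. wb (z - l0) \<noteq> 0 \<and> wa \<gamma> (z + l0) \<noteq> 0 \<and> wa \<gamma> (2 * z) \<noteq> 0"
    and "\<forall>zs \<in> {xs, ys}. \<forall>j<n. \<forall>k<n. j \<noteq> k \<longrightarrow>
           wb (zs ! j - zs ! k) \<noteq> 0 \<and> wa \<gamma> (zs ! j + zs ! k) \<noteq> 0 \<and> wb (zs ! j + zs ! k + \<gamma>) \<noteq> 0"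
  shows "M0 \<gamma> h L \<mu> l0 xs ys * Sn \<gamma> h L \<mu> xs ys
         + (\<Sum>k<n. NC \<gamma> h L \<mu> l0 xs k * Sn \<gamma> h L \<mu> (delvec l0 xs k) ys)
         + (\<Sum>k<n. NB \<gamma> h L \<mu> l0 ys k * Sn \<gamma> h L \<mu> xs (delvec l0 ys k)) = 0"
proof -
  note lx = assms(3) and ly = assms(4) and h1 = assms(5) and h2 = assms(6)
  define js where "js = jsL L"
  define \<mu>' where "\<mu>' = (\<lambda>k. - \<mu> k)"
  have mm: "(\<lambda>k. - \<mu>' k) = \<mu>" unfolding \<mu>'_def by simp
  have sjs: "set js = {1..L}" unfolding js_def by (rule jsL_props)
  have ch: "chain js" unfolding js_def by (rule chain_jsL)
  interpret C: chain \<gamma> h \<mu> js by (rule ch)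
  interpret C': chain \<gamma> h \<mu>' js by (rule ch)
  interpret R: aba \<gamma> "Er \<gamma> h \<mu> js False False" "Er \<gamma> h \<mu> js False True" C.Dh
      "\<lambda>x. alr \<gamma> h \<mu> x js" "\<lambda>x. dhr \<gamma> h \<mu> x js" "vac L"
    by (rule C.aba_inst[OF sjs])
  interpret R': aba \<gamma> "Er \<gamma> h \<mu>' js False False" "Er \<gamma> h \<mu>' js False True" C'.Dh
      "\<lambda>x. alr \<gamma> h \<mu>' x js" "\<lambda>x. dhr \<gamma> h \<mu>' x js" "vac L"
    by (rule C'.aba_inst[OF sjs])
  have alr': "alr \<gamma> h \<mu>' x js = alr \<gamma> h \<mu> x js" for x unfolding \<mu>'_def by (rule alr_neg)
  have dhr': "dhr \<gamma> h \<mu>' x js = dhr \<gamma> h \<mu> x js" for x unfolding \<mu>'_def dhr_def by (simp add: alr_neg der_neg)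
  have S: "Sn \<gamma> h L \<mu> X Y = pairQ L (R'.Bs X) (R.Bs Y)" for X Y
    unfolding R.Bs_def R'.Bs_def unfolding Sn_pair \<mu>'_def js_def ..
  have cndY: "\<forall>y\<in>set ys. R.cnd l0 y" and cndX: "\<forall>y\<in>set xs. R'.cnd l0 y"
    using h1 unfolding R.cnd_def R'.cnd_def by (auto simp: wb_swap[of l0] add.commute)
  have pwY: "R.pw ys"
  proof (rule R.pw_nth, intro allI impI)
    fix i j assume ij: "i < j" "j < length ys"
    have "ys ! j \<in> set ys" using ij by simp
    then show "R.cnd (ys ! i) (ys ! j)"
      using h2 h1 ij ly unfolding R.cnd_def by (metis UnI2 insertCI less_trans less_not_refl)
  qed
  have pwX: "R'.pw xs"
  proof (rule R'.pw_nth, intro allI impI)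
    fix i j assume ij: "i < j" "j < length xs"
    have "xs ! j \<in> set xs" using ij by simp
    then show "R'.cnd (xs ! i) (xs ! j)"
      using h2 h1 ij lx unfolding R'.cnd_def by (metis UnI1 insertCI less_trans less_not_refl)
  qed
  have actY: "Er \<gamma> h \<mu> js False False l0 (R.Bs ys) = (\<lambda>s. alr \<gamma> h \<mu> l0 js * R.P1 ys l0 * R.Bs ys s
     + (\<Sum>k<length ys. R.GA l0 (ys ! k) (dl ys k) * Er \<gamma> h \<mu> js False True l0 (R.Bs (dl ys k)) s))"
    using R.action[OF pwY] cndY by blast
  have actX: "Er \<gamma> h \<mu>' js False False l0 (R'.Bs xs) = (\<lambda>s. alr \<gamma> h \<mu>' l0 js * R'.P1 xs l0 * R'.Bs xs s
     + (\<Sum>k<length xs. R'.GA l0 (xs ! k) (dl xs k) * Er \<gamma> h \<mu>' js False True l0 (R'.Bs (dl xs k)) s))"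
    using R'.action[OF pwX] cndX by blast
  define X0 where "X0 = pairQ L (R'.Bs xs) (Er \<gamma> h \<mu> js False False l0 (R.Bs ys))"
  have right: "X0 = alr \<gamma> h \<mu> l0 js * R.P1 ys l0 * Sn \<gamma> h L \<mu> xs ys
      + (\<Sum>k<length ys. R.GA l0 (ys ! k) (dl ys k) * Sn \<gamma> h L \<mu> xs (l0 # dl ys k))"
    unfolding X0_def actY pairQ_lin S R.Bs_Cons ..
  have left: "X0 = alr \<gamma> h \<mu> l0 js * R.P1 xs l0 * Sn \<gamma> h L \<mu> xs ys
      + (\<Sum>k<length xs. R.GA l0 (xs ! k) (dl xs k) * Sn \<gamma> h L \<mu> (l0 # dl xs k) ys)"
  proof -
    have sub: "set js \<subseteq> {1..L}" using sjs by simp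
    have "X0 = pairQ L (Er \<gamma> h \<mu>' js False False l0 (R'.Bs xs)) (R.Bs ys)"
      unfolding X0_def using Er_transp[OF sub, of \<gamma> h \<mu>' False False l0 "R'.Bs xs" "R.Bs ys"] mm by simp
    also have "\<dots> = alr \<gamma> h \<mu>' l0 js * R'.P1 xs l0 * Sn \<gamma> h L \<mu> xs ys
      + (\<Sum>k<length xs. R'.GA l0 (xs ! k) (dl xs k) * Sn \<gamma> h L \<mu> (l0 # dl xs k) ys)"
      unfolding actX pairQ_lin' S R'.Bs_Cons ..
    finally show ?thesis
      unfolding alr' R'.GA_def R.GA_def R'.P1_def R.P1_def R'.P2_def R.P2_def dhr' .
  qed
  have GN: "R.GA l0 (ws ! k) (dl ws k) = - Nlam \<gamma> h L \<mu> l0 ws k"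
    if k: "k < length ws" and n1: "wa \<gamma> (2 * (ws ! k)) \<noteq> 0" and n2: "wb (ws ! k - l0) \<noteq> 0"
      and n3: "wa \<gamma> (ws ! k + l0) \<noteq> 0" for ws k
  proof -
    have e1: "wb (l0 - ws ! k) = - wb (ws ! k - l0)" by (rule wb_swap)
    have e2: "wa \<gamma> (l0 + ws ! k) = wa \<gamma> (ws ! k + l0)" by (simp add: add.commute)
    have al: "alr \<gamma> h \<mu> (ws ! k) js = LamA \<gamma> h L \<mu> (ws ! k)" unfolding js_def by (rule alr_LamA)
    have dl': "dhr \<gamma> h \<mu> (ws ! k) js = wa \<gamma> (2 * (ws ! k)) * LamDt \<gamma> h L \<mu> (ws ! k)"
      unfolding js_def by (rule dhr_LamDt[OF n1])
    show ?thesis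
      unfolding R.GA_def R.P1_def R.P2_def prod_dl[OF k] al dl' K1_def K2_def Nlam_def Let_def e1 e2
      using n1 n2 n3 by (simp add: field_simps)
  qed
  have M: "M0 \<gamma> h L \<mu> l0 xs ys = LamA \<gamma> h L \<mu> l0 * (R.P1 ys l0 - R.P1 xs l0)"
    unfolding M0_def R.P1_def prod_nth ..
  have al0: "alr \<gamma> h \<mu> l0 js = LamA \<gamma> h L \<mu> l0" unfolding js_def by (rule alr_LamA)
  have sumC: "(\<Sum>k<n. NC \<gamma> h L \<mu> l0 xs k * Sn \<gamma> h L \<mu> (delvec l0 xs k) ys)
      = - (\<Sum>k<length xs. R.GA l0 (xs ! k) (dl xs k) * Sn \<gamma> h L \<mu> (l0 # dl xs k) ys)"
  proof -
    have "(\<Sum>k<n. NC \<gamma> h L \<mu> l0 xs k * Sn \<gamma> h L \<mu> (delvec l0 xs k) ys)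
       = (\<Sum>k<length xs. - (R.GA l0 (xs ! k) (dl xs k) * Sn \<gamma> h L \<mu> (l0 # dl xs k) ys))"
    proof (rule sum.cong)
      show "{..<n} = {..<length xs}" using lx by simp
    next
      fix k assume "k \<in> {..<length xs}"
      then have k: "k < length xs" by simp
      then have "xs ! k \<in> set xs" by simp
      then have nz: "wa \<gamma> (2 * (xs ! k)) \<noteq> 0" "wb (xs ! k - l0) \<noteq> 0" "wa \<gamma> (xs ! k + l0) \<noteq> 0"
        using h1 by auto
      show "NC \<gamma> h L \<mu> l0 xs k * Sn \<gamma> h L \<mu> (delvec l0 xs k) ys = - (R.GA l0 (xs ! k) (dl xs k) * Sn \<gamma> h L \<mu> (l0 # dl xs k) ys)"
        unfolding GN[OF k nz] NC_def delvec_dl by simp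
    qed
    then show ?thesis by (simp add: sum_negf)
  qed
  have sumB: "(\<Sum>k<n. NB \<gamma> h L \<mu> l0 ys k * Sn \<gamma> h L \<mu> xs (delvec l0 ys k))
      = (\<Sum>k<length ys. R.GA l0 (ys ! k) (dl ys k) * Sn \<gamma> h L \<mu> xs (l0 # dl ys k))"
  proof (rule sum.cong)
    show "{..<n} = {..<length ys}" using ly by simp
  next
    fix k assume "k \<in> {..<length ys}"
    then have k: "k < length ys" by simp
    then have "ys ! k \<in> set ys" by simp
    then have nz: "wa \<gamma> (2 * (ys ! k)) \<noteq> 0" "wb (ys ! k - l0) \<noteq> 0" "wa \<gamma> (ys ! k + l0) \<noteq> 0"
      using h1 by auto
    show "NB \<gamma> h L \<mu> l0 ys k * Sn \<gamma> h L \<mu> xs (delvec l0 ys k) = R.GA l0 (ys ! k) (dl ys k) * Sn \<gamma> h L \<mu> xs (l0 # dl ys k)"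
      unfolding GN[OF k nz] NB_def delvec_dl by simp
  qed
  have "M0 \<gamma> h L \<mu> l0 xs ys * Sn \<gamma> h L \<mu> xs ys
         + (\<Sum>k<n. NC \<gamma> h L \<mu> l0 xs k * Sn \<gamma> h L \<mu> (delvec l0 xs k) ys)
         + (\<Sum>k<n. NB \<gamma> h L \<mu> l0 ys k * Sn \<gamma> h L \<mu> xs (delvec l0 ys k))
      = (alr \<gamma> h \<mu> l0 js * R.P1 ys l0 * Sn \<gamma> h L \<mu> xs ys
      + (\<Sum>k<length ys. R.GA l0 (ys ! k) (dl ys k) * Sn \<gamma> h L \<mu> xs (l0 # dl ys k)))
      - (alr \<gamma> h \<mu> l0 js * R.P1 xs l0 * Sn \<gamma> h L \<mu> xs ys
      + (\<Sum>k<length xs. R.GA l0 (xs ! k) (dl xs k) * Sn \<gamma> h L \<mu> (l0 # dl xs k) ys))"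
    unfolding M sumC sumB al0 by (simp add: algebra_simps)
  also have "\<dots> = 0" using right left by simp
  finally show ?thesis .
qed


end
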